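(* Let $\mathcal{L}$ be a finite set of localities and let $\mathcal{G}$ be a connected, undirected (symmetric) simple graph on $\mathcal{L}$ with $0/1$ adjacency matrix $G$; let $\lambda_r$ be the spectral radius of $G$. Let $\beta,\beta^{\textsc{int}}:\mathbb{Z}_{\ge 0}\to(0,\infty)$ be bounded functions such that the limits $\beta_\infty=\lim_{n\to\infty}\beta(n)$ and $\beta^{\textsc{int}}_\infty=\lim_{n\to\infty}\beta^{\textsc{int}}(n)$ exist, and let $\delta>0$. Consider the continuous-time Markov chain $\mathbf{X}(t)=(X_u(t))_{u\in\mathcal{L}}$ on $\mathbb{Z}_{\ge0}^{\mathcal{L}}$ in which, writing $X(t)=\sum_{u}X_u(t)$, for each $u\in\mathcal{L}$: $X_u\to X_u+1$ at rate $\sum_{v:(u,v)\in\mathcal{G}}\beta(X(t))X_v(t)+\beta^{\textsc{int}}(X(t))X_u(t)$, and $X_u\to X_u-1$ at rate $\delta X_u(t)$. For a state $\mathbf{X}$, let $T_{\mathbf{X}}$ be the first time the chain started at $\mathbf{X}$ reaches the all-zero state $\mathbf{0}$. Then: (i) If $\beta_\infty\lambda_r+\beta^{\textsc{int}}_\infty<\delta$, there exists a constant $C>0$ such that $\mathbb{E}[T_{\mathbf{X}}]\le C\ln n$ for every state $\mathbf{X}$ with $\mathbf{1}^\top\mathbf{X}=n\ge 2$. (ii) If $\beta_\infty\lambda_r+\beta^{\textsc{int}}_\infty>\delta$, then $\mathbb{E}[T_{\mathbf{X}}]=\infty$ for every state $\mathbf{X}\neq\mathbf{0}$.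
   Context: $X_u(t)$ is the number of infected people at locality $u$ at time $t$; the number of infections at each locality may be any nonnegative integer. $\mathbf{1}$ denotes the all-ones vector, so $\mathbf{1}^\top\mathbf{X}$ is the total number of infections. The all-zero state is absorbing. *)

theory Defs
  imports "HOL-Analysis.Analysis" "Jordan_Normal_Form.Spectral_Radius"
begin

text \<open>Localities are 0,...,m-1. A state is a function nat => nat which is zero outside
  the localities. The graph is a relation E (only its restriction to the localities matters).\<close>

definition loc_state :: "nat \<Rightarrow> (nat \<Rightarrow> nat) \<Rightarrow> bool" where
  "loc_state m x \<longleftrightarrow> (\<forall>u\<ge>m. x u = 0)"

definition total_inf :: "nat \<Rightarrow> (nat \<Rightarrow> nat) \<Rightarrow> nat" where
  "total_inf m x = (\<Sum>u<m. x u)"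

definition simple_graph_on :: "nat \<Rightarrow> (nat \<Rightarrow> nat \<Rightarrow> bool) \<Rightarrow> bool" where
  "simple_graph_on m E \<longleftrightarrow> (\<forall>u<m. \<forall>v<m. E u v \<longleftrightarrow> E v u) \<and> (\<forall>u<m. \<not> E u u)"

definition connected_on :: "nat \<Rightarrow> (nat \<Rightarrow> nat \<Rightarrow> bool) \<Rightarrow> bool" where
  "connected_on m E \<longleftrightarrow>
     (\<forall>u<m. \<forall>v<m. (\<lambda>a b. E a b \<and> a < m \<and> b < m)\<^sup>*\<^sup>* u v)"

text \<open>0/1 adjacency matrix (complex entries, for the library spectral radius).\<close>
definition adj_mat :: "nat \<Rightarrow> (nat \<Rightarrow> nat \<Rightarrow> bool) \<Rightarrow> complex mat" where
  "adj_mat m E = mat m m (\<lambda>(i, j). if E i j then 1 else 0)"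

definition up_rate :: "nat \<Rightarrow> (nat \<Rightarrow> nat \<Rightarrow> bool) \<Rightarrow> (nat \<Rightarrow> real) \<Rightarrow> (nat \<Rightarrow> real)
    \<Rightarrow> (nat \<Rightarrow> nat) \<Rightarrow> nat \<Rightarrow> real" where
  "up_rate m E \<beta> \<beta>int x u =
     (\<Sum>v<m. if E u v then \<beta> (total_inf m x) * real (x v) else 0)
     + \<beta>int (total_inf m x) * real (x u)"

definition down_rate :: "real \<Rightarrow> (nat \<Rightarrow> nat) \<Rightarrow> nat \<Rightarrow> real" where
  "down_rate \<delta> x u = \<delta> * real (x u)"

definition total_rate :: "nat \<Rightarrow> (nat \<Rightarrow> nat \<Rightarrow> bool) \<Rightarrow> (nat \<Rightarrow> real) \<Rightarrow> (nat \<Rightarrow> real)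
    \<Rightarrow> real \<Rightarrow> (nat \<Rightarrow> nat) \<Rightarrow> real" where
  "total_rate m E \<beta> \<beta>int \<delta> x = (\<Sum>u<m. up_rate m E \<beta> \<beta>int x u + down_rate \<delta> x u)"

definition jump_prob :: "nat \<Rightarrow> (nat \<Rightarrow> nat \<Rightarrow> bool) \<Rightarrow> (nat \<Rightarrow> real) \<Rightarrow> (nat \<Rightarrow> real)
    \<Rightarrow> real \<Rightarrow> (nat \<Rightarrow> nat) \<Rightarrow> (nat \<Rightarrow> nat) \<Rightarrow> ennreal" where
  "jump_prob m E \<beta> \<beta>int \<delta> x y =
     (if x = (\<lambda>_. 0) then (if y = x then 1 else 0)
      else (\<Sum>u<m.
        (if y = x(u := x u + 1)
         then ennreal (up_rate m E \<beta> \<beta>int x u / total_rate m E \<beta> \<beta>int \<delta> x) else 0)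
        + (if 0 < x u \<and> y = x(u := x u - 1)
         then ennreal (down_rate \<delta> x u / total_rate m E \<beta> \<beta>int \<delta> x) else 0)))"

fun jump_dist :: "nat \<Rightarrow> (nat \<Rightarrow> nat \<Rightarrow> bool) \<Rightarrow> (nat \<Rightarrow> real) \<Rightarrow> (nat \<Rightarrow> real)
    \<Rightarrow> real \<Rightarrow> (nat \<Rightarrow> nat) \<Rightarrow> nat \<Rightarrow> (nat \<Rightarrow> nat) \<Rightarrow> ennreal" where
  "jump_dist m E \<beta> \<beta>int \<delta> X 0 y = (if y = X then 1 else 0)"
| "jump_dist m E \<beta> \<beta>int \<delta> X (Suc n) y =
     (\<integral>\<^sup>+ x. jump_dist m E \<beta> \<beta>int \<delta> X n x * jump_prob m E \<beta> \<beta>int \<delta> x y \<partial>count_space UNIV)"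

definition mean_hold :: "nat \<Rightarrow> (nat \<Rightarrow> nat \<Rightarrow> bool) \<Rightarrow> (nat \<Rightarrow> real) \<Rightarrow> (nat \<Rightarrow> real)
    \<Rightarrow> real \<Rightarrow> (nat \<Rightarrow> nat) \<Rightarrow> ennreal" where
  "mean_hold m E \<beta> \<beta>int \<delta> x =
     (if x = (\<lambda>_. 0) then 0 else ennreal (1 / total_rate m E \<beta> \<beta>int \<delta> x))"

text \<open>Expected hitting time of the zero state: E[T_X] = sum over jumps n of the expected
  holding time in the n-th visited state (Tonelli applied to T = sum of holding times).\<close>
definition expected_hitting_time :: "nat \<Rightarrow> (nat \<Rightarrow> nat \<Rightarrow> bool) \<Rightarrow> (nat \<Rightarrow> real) \<Rightarrow> (nat \<Rightarrow> real)
    \<Rightarrow> real \<Rightarrow> (nat \<Rightarrow> nat) \<Rightarrow> ennreal" where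
  "expected_hitting_time m E \<beta> \<beta>int \<delta> X =
     (\<Sum>n. \<integral>\<^sup>+ x. jump_dist m E \<beta> \<beta>int \<delta> X n x * mean_hold m E \<beta> \<beta>int \<delta> x \<partial>count_space UNIV)"

end

theory Submission
  imports Defs
begin


definition Gop :: "nat \<Rightarrow> (nat \<Rightarrow> nat \<Rightarrow> bool) \<Rightarrow> (nat \<Rightarrow> real) \<Rightarrow> nat \<Rightarrow> real" where
  "Gop m E z i = (\<Sum>j<m. if E i j then z j else 0)"

lemma adj_carrier: "adj_mat m E \<in> carrier_mat m m"
  by (simp add: adj_mat_def)

lemma adj_mult_vec:
  assumes "i < m" "x \<in> carrier_vec m"
  shows "(adj_mat m E *\<^sub>v x) $ i = (\<Sum>j<m. if E i j then x $ j else 0)"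
  using assms by (auto simp: adj_mat_def scalar_prod_def row_def atLeast0LessThan intro!: sum.cong)

lemma Gop_nonneg: "(\<And>j. j < m \<Longrightarrow> 0 \<le> z j) \<Longrightarrow> 0 \<le> Gop m E z i"
  unfolding Gop_def by (auto intro!: sum_nonneg)

lemma Gop_mono: "(\<And>j. j < m \<Longrightarrow> z j \<le> z' j) \<Longrightarrow> Gop m E z i \<le> Gop m E z' i"
  unfolding Gop_def by (auto intro!: sum_mono)

lemma Gop_add: "Gop m E (\<lambda>j. z j + z' j) i = Gop m E z i + Gop m E z' i"
  unfolding Gop_def sum.distrib[symmetric] by (rule sum.cong) auto

lemma Gop_cmult: "Gop m E (\<lambda>j. c * z j) i = c * Gop m E z i"
  unfolding Gop_def sum_distrib_left by (rule sum.cong) auto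

lemma Gop_sum: "Gop m E (\<lambda>j. \<Sum>k\<in>K. f k j) i = (\<Sum>k\<in>K. Gop m E (f k) i)"
proof -
  have "Gop m E (\<lambda>j. \<Sum>k\<in>K. f k j) i = (\<Sum>j<m. \<Sum>k\<in>K. if E i j then f k j else 0)"
    unfolding Gop_def by (rule sum.cong) auto
  also have "\<dots> = (\<Sum>k\<in>K. \<Sum>j<m. if E i j then f k j else 0)" by (rule sum.swap)
  finally show ?thesis unfolding Gop_def .
qed

lemma sr_nonneg: "0 < m \<Longrightarrow> 0 \<le> spectral_radius (adj_mat m E)"
  using spectral_radius_mem_max(1)[OF adj_carrier[of m E]] by auto

lemma exists_nonneg_subeig:
  assumes m: "0 < m"
  shows "\<exists>y. (\<forall>i<m. 0 \<le> y i) \<and> (\<exists>i<m. 0 < y i) \<and>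
     (\<forall>i<m. spectral_radius (adj_mat m E) * y i \<le> Gop m E y i)"
proof -
  let ?A = "adj_mat m E"
  let ?l = "spectral_radius ?A"
  from spectral_radius_mem_max(1)[OF adj_carrier[of m E] m]
  obtain ev where ev: "ev \<in> spectrum ?A" and nev: "norm ev = ?l" by auto
  from ev obtain x where x: "eigenvector ?A x ev" unfolding spectrum_def eigenvalue_def by auto
  have xc: "x \<in> carrier_vec m" and xn: "x \<noteq> 0\<^sub>v m" and xe: "?A *\<^sub>v x = ev \<cdot>\<^sub>v x"
    using x unfolding eigenvector_def by (auto simp: adj_mat_def)
  define y where "y = (\<lambda>i. norm (x $ i))"
  have "\<exists>i<m. x $ i \<noteq> 0"
  proof (rule ccontr)
    assume "\<not> ?thesis"
    hence "x = 0\<^sub>v m" using xc by (intro eq_vecI) auto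
    with xn show False by simp
  qed
  then obtain i0 where "i0 < m" "0 < y i0" unfolding y_def by auto
  moreover have "?l * y i \<le> Gop m E y i" if i: "i < m" for i
  proof -
    have "?l * y i = norm ((?A *\<^sub>v x) $ i)" using i xc by (simp add: xe y_def nev norm_mult)
    also have "\<dots> = norm (\<Sum>j<m. if E i j then x $ j else 0)" using adj_mult_vec[OF i xc] by simp
    also have "\<dots> \<le> (\<Sum>j<m. norm (if E i j then x $ j else 0))" by (rule norm_sum)
    also have "\<dots> = Gop m E y i" unfolding Gop_def y_def by (auto intro!: sum.cong)
    finally show ?thesis .
  qed
  ultimately show ?thesis unfolding y_def by (intro exI[of _ y]) (auto simp: y_def)
qed


lemma exists_pos_subeig:
  assumes m: "0 < m" and g: "simple_graph_on m E" and c: "connected_on m E"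
  shows "\<exists>v. (\<forall>i<m. 0 < v i) \<and>
     (\<forall>i<m. spectral_radius (adj_mat m E) * v i \<le> Gop m E v i)"
proof -
  let ?l = "spectral_radius (adj_mat m E)"
  have l0: "0 \<le> ?l" using sr_nonneg[OF m] .
  define good where "good z \<longleftrightarrow> (\<forall>i<m. 0 \<le> z i) \<and> (\<exists>i<m. 0 < z i) \<and>
     (\<forall>i<m. ?l * z i \<le> Gop m E z i)" for z
  define S where "S z = {i. i < m \<and> 0 < z i}" for z :: "nat \<Rightarrow> real"
  have Sfin: "finite (S z)" for z unfolding S_def by auto
  have Sle: "card (S z) \<le> m" for z
    using card_mono[of "{..<m}" "S z"] unfolding S_def by auto
  obtain y where y: "good y" using exists_nonneg_subeig[OF m, of E] unfolding good_def by blast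
  have "\<exists>x. good x \<and> (\<forall>y. good y \<longrightarrow> card (S y) \<le> card (S x))"
    by (rule ex_has_greatest_nat[of good y "\<lambda>z. card (S z)" "Suc m"]) (use y Sle in \<open>auto simp: less_Suc_eq_le\<close>)
  then obtain z where z: "good z" and zmax: "\<And>z'. good z' \<Longrightarrow> card (S z') \<le> card (S z)"
    by blast
  define z' where "z' = (\<lambda>i. z i + Gop m E z i)"
  have znn: "\<And>i. i < m \<Longrightarrow> 0 \<le> z i" using z unfolding good_def by auto
  have Gznn: "\<And>i. 0 \<le> Gop m E z i" using Gop_nonneg znn by blast
  have "good z'"
  proof -
    have "?l * z' i \<le> Gop m E z' i" if i: "i < m" for i
    proof -
      have "?l * Gop m E z i = Gop m E (\<lambda>j. ?l * z j) i" by (simp add: Gop_cmult)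
      also have "\<dots> \<le> Gop m E (Gop m E z) i" using z unfolding good_def by (intro Gop_mono) auto
      finally have "?l * Gop m E z i \<le> Gop m E (Gop m E z) i" .
      moreover have "?l * z i \<le> Gop m E z i" using z i unfolding good_def by auto
      ultimately show ?thesis unfolding z'_def by (simp add: Gop_add distrib_left)
    qed
    moreover have "\<exists>i<m. 0 < z' i" using z Gznn unfolding good_def z'_def
      by (meson add_pos_nonneg)
    ultimately show ?thesis unfolding good_def z'_def using znn Gznn by (auto intro: add_nonneg_nonneg)
  qed
  have sub: "S z \<subseteq> S z'" unfolding S_def z'_def using Gznn by (auto intro: add_pos_nonneg)
  have eq: "S z' = S z"
    using card_subset_eq[OF Sfin sub] zmax[OF \<open>good z'\<close>] card_mono[OF Sfin sub] by auto
  have nb: "b \<in> S z" if "a \<in> S z" "E a b" "b < m" for a b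
  proof -
    have am: "a < m" and za: "0 < z a" using that unfolding S_def by auto
    have "E b a" using g that am unfolding simple_graph_on_def by auto
    have "z a \<le> Gop m E z b" unfolding Gop_def
      using member_le_sum[of a "{..<m}" "\<lambda>j. if E b j then z j else 0"] am \<open>E b a\<close> znn
      by auto
    hence "0 < z' b" unfolding z'_def using za znn[OF \<open>b < m\<close>] by linarith
    thus ?thesis using eq \<open>b < m\<close> unfolding S_def by auto
  qed
  from z obtain i0 where i0: "i0 < m" "0 < z i0" unfolding good_def by auto
  have "0 < z j" if j: "j < m" for j
  proof -
    have "(\<lambda>a b. E a b \<and> a < m \<and> b < m)\<^sup>*\<^sup>* i0 j" using c i0 j unfolding connected_on_def by auto
    hence "j \<in> S z"
    proof (induction rule: rtranclp_induct)
      case base thus ?case using i0 unfolding S_def by auto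
    next
      case (step b c) thus ?case using nb by auto
    qed
    thus ?thesis unfolding S_def by auto
  qed
  thus ?thesis using z unfolding good_def by auto
qed


lemma smult_mat_mult_vec:
  assumes "A \<in> carrier_mat n n" "v \<in> carrier_vec n"
  shows "(k \<cdot>\<^sub>m A) *\<^sub>v v = k \<cdot>\<^sub>v (A *\<^sub>v v)"
  using assms by (intro eq_vecI) (auto simp: row_def scalar_prod_def sum_distrib_left mult.assoc intro!: sum.cong)

lemma smult_smult_mat': "a \<cdot>\<^sub>m (b \<cdot>\<^sub>m M) = (a * b) \<cdot>\<^sub>m (M :: 'a :: comm_ring_1 mat)"
  by (rule eq_matI) auto

lemma pow_smult_mat:
  assumes A: "(A :: 'a :: comm_ring_1 mat) \<in> carrier_mat n n"
  shows "(k \<cdot>\<^sub>m A) ^\<^sub>m j = (k ^ j) \<cdot>\<^sub>m (A ^\<^sub>m j)"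
proof (induction j)
  case 0 thus ?case using A by (intro eq_matI) auto
next
  case (Suc j)
  have "(k \<cdot>\<^sub>m A) ^\<^sub>m Suc j = ((k ^ j) \<cdot>\<^sub>m (A ^\<^sub>m j)) * (k \<cdot>\<^sub>m A)" using Suc by simp
  also have "\<dots> = (k ^ j) \<cdot>\<^sub>m ((A ^\<^sub>m j) * (k \<cdot>\<^sub>m A))"
    using A by (intro mult_smult_assoc_mat) auto
  also have "(A ^\<^sub>m j) * (k \<cdot>\<^sub>m A) = k \<cdot>\<^sub>m ((A ^\<^sub>m j) * A)"
    using A by (intro mult_smult_distrib) auto
  finally show ?case by (simp add: smult_smult_mat' mult.commute)
qed

lemma adj_pow_vec:
  assumes i: "i < m"
  shows "(adj_mat m E ^\<^sub>m k *\<^sub>v vec m (\<lambda>j. complex_of_real (z j))) $ i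
      = complex_of_real ((Gop m E ^^ k) z i)"
  using i
proof (induction k arbitrary: z i)
  case 0 thus ?case using adj_carrier[of m E] by (simp add: adj_mat_def)
next
  case (Suc k)
  let ?A = "adj_mat m E"
  have A: "?A \<in> carrier_mat m m" by (rule adj_carrier)
  have "?A *\<^sub>v vec m (\<lambda>j. complex_of_real (z j)) = vec m (\<lambda>j. complex_of_real (Gop m E z j))"
  proof (rule eq_vecI)
    fix i assume "i < dim_vec (vec m (\<lambda>j. complex_of_real (Gop m E z j)))"
    hence i: "i < m" by simp
    show "(?A *\<^sub>v vec m (\<lambda>j. complex_of_real (z j))) $ i = vec m (\<lambda>j. complex_of_real (Gop m E z j)) $ i"
      using i by (auto simp: adj_mult_vec Gop_def intro!: sum.cong)
  next
    show "dim_vec (?A *\<^sub>v vec m (\<lambda>j. complex_of_real (z j))) = dim_vec (vec m (\<lambda>j. complex_of_real (Gop m E z j)))"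
      by (simp add: adj_mat_def)
  qed
  moreover have "?A ^\<^sub>m Suc k *\<^sub>v vec m (\<lambda>j. complex_of_real (z j))
     = ?A ^\<^sub>m k *\<^sub>v (?A *\<^sub>v vec m (\<lambda>j. complex_of_real (z j)))"
    using A by (simp add: assoc_mult_mat_vec[of _ m m _ m])
  ultimately have "?A ^\<^sub>m Suc k *\<^sub>v vec m (\<lambda>j. complex_of_real (z j)) = ?A ^\<^sub>m k *\<^sub>v vec m (\<lambda>j. complex_of_real (Gop m E z j))"
    by simp
  moreover have "(Gop m E ^^ Suc k) z i = (Gop m E ^^ k) (Gop m E z) i"
    by (simp only: funpow_Suc_right o_apply)
  ultimately show ?case using Suc.IH[OF Suc.prems] by simp
qed

lemma exists_pos_supereig:
  assumes m: "0 < m" and rho: "spectral_radius (adj_mat m E) < \<rho>"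
  shows "\<exists>v. (\<forall>i<m. 1 \<le> v i) \<and> (\<forall>i<m. Gop m E v i \<le> \<rho> * v i)"
proof -
  let ?A = "adj_mat m E"
  let ?l = "spectral_radius ?A"
  have A: "?A \<in> carrier_mat m m" by (rule adj_carrier)
  have l0: "0 \<le> ?l" using sr_nonneg[OF m] .
  define r where "r = (?l + \<rho>) / 2"
  have r0: "0 < r" and lr: "?l < r" and rrho: "r < \<rho>" using l0 rho unfolding r_def by auto
  define B where "B = complex_of_real (1 / r) \<cdot>\<^sub>m ?A"
  have B: "B \<in> carrier_mat m m" unfolding B_def using A by simp
  have "spectral_radius B < 1"
  proof -
    from spectral_radius_mem_max(1)[OF B m] obtain mu where
      mu: "mu \<in> spectrum B" and nmu: "spectral_radius B = norm mu" by auto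
    from mu obtain v where v: "eigenvector B v mu" unfolding spectrum_def eigenvalue_def by auto
    have vc: "v \<in> carrier_vec m" and vn: "v \<noteq> 0\<^sub>v m" and ve: "B *\<^sub>v v = mu \<cdot>\<^sub>v v"
      using v B unfolding eigenvector_def by auto
    have "B *\<^sub>v v = complex_of_real (1 / r) \<cdot>\<^sub>v (?A *\<^sub>v v)"
      unfolding B_def by (rule smult_mat_mult_vec[OF A vc])
    hence "complex_of_real r \<cdot>\<^sub>v (B *\<^sub>v v) = ?A *\<^sub>v v"
      using r0 by (simp add: smult_smult_assoc)
    hence "?A *\<^sub>v v = (complex_of_real r * mu) \<cdot>\<^sub>v v" using ve by (simp add: smult_smult_assoc)
    hence "eigenvector ?A v (complex_of_real r * mu)" unfolding eigenvector_def using vc vn A by auto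
    hence "eigenvalue ?A (complex_of_real r * mu)" unfolding eigenvalue_def by auto
    hence "norm (complex_of_real r * mu) \<le> ?l"
      using spectral_radius_mem_max(2)[OF A m] unfolding spectrum_def by auto
    hence "r * norm mu \<le> ?l" using r0 by (simp add: norm_mult)
    hence "r * norm mu < r * 1" using lr by simp
    hence "norm mu < 1" using r0 by (simp only: mult_less_cancel_left_pos)
    thus ?thesis using nmu by simp
  qed
  from spectral_radius_jnf_norm_bound_less_1_upper_triangular[OF B this]
  obtain c where c: "\<And>k. norm_bound (B ^\<^sub>m k) c" by auto
  have bound: "(Gop m E ^^ k) (\<lambda>_. 1) i \<le> m * (c * r ^ k)" if i: "i < m" for i k
  proof -
    have "complex_of_real ((Gop m E ^^ k) (\<lambda>_. 1) i) = (?A ^\<^sub>m k *\<^sub>v vec m (\<lambda>j. complex_of_real 1)) $ i"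
      using adj_pow_vec[OF i, of E k "\<lambda>_. 1"] by simp
    also have "\<dots> = (\<Sum>j<m. (?A ^\<^sub>m k) $$ (i, j))"
      using i A by (simp add: scalar_prod_def row_def atLeast0LessThan)
    finally have eq: "complex_of_real ((Gop m E ^^ k) (\<lambda>_. 1) i) = (\<Sum>j<m. (?A ^\<^sub>m k) $$ (i, j))" .
    have Bk: "B ^\<^sub>m k = (complex_of_real (1/r)) ^ k \<cdot>\<^sub>m (?A ^\<^sub>m k)"
      unfolding B_def by (rule pow_smult_mat[OF A])
    have ent: "norm ((?A ^\<^sub>m k) $$ (i, j)) \<le> c * r ^ k" if j: "j < m" for j
    proof -
      have "(B ^\<^sub>m k) $$ (i, j) = (complex_of_real (1/r)) ^ k * (?A ^\<^sub>m k) $$ (i, j)"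
        using i j A by (simp add: Bk)
      hence "(?A ^\<^sub>m k) $$ (i, j) = complex_of_real (r ^ k) * (B ^\<^sub>m k) $$ (i, j)"
        using r0 by (simp add: power_divide field_simps)
      hence "norm ((?A ^\<^sub>m k) $$ (i, j)) = r ^ k * norm ((B ^\<^sub>m k) $$ (i, j))"
        using r0 by (simp add: norm_mult norm_power)
      also have "\<dots> \<le> r ^ k * c"
        using c[of k] i j B unfolding norm_bound_def using r0 by (intro mult_left_mono) auto
      finally show ?thesis by (simp add: mult.commute)
    qed
    have "(Gop m E ^^ k) (\<lambda>_. 1) i \<le> norm (complex_of_real ((Gop m E ^^ k) (\<lambda>_. 1) i))" by simp
    also have "\<dots> \<le> (\<Sum>j<m. norm ((?A ^\<^sub>m k) $$ (i, j)))" unfolding eq by (rule norm_sum)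
    also have "\<dots> \<le> (\<Sum>j<m. c * r ^ k)" by (intro sum_mono ent) auto
    finally show ?thesis by simp
  qed
  define c' where "c' = max c 0"
  have "\<exists>n. (r / \<rho>) ^ n < 1 / (m * c' + 1)"
    using r0 rrho by (intro real_arch_pow_inv) (auto simp: c'_def intro!: divide_pos_pos add_nonneg_pos)
  then obtain n where n: "(r / \<rho>) ^ n < 1 / (m * c' + 1)" by auto
  have c'0: "0 \<le> c'" unfolding c'_def by simp
  have mc: "0 < real m * c' + 1" using c'0 by (simp add: add_nonneg_pos)
  have rho0: "0 < \<rho>" using r0 rrho by simp
  have "n \<noteq> 0"
  proof
    assume "n = 0"
    hence "1 < 1 / (m * c' + 1)" using n by simp
    moreover have "1 / (m * c' + 1) \<le> 1" using c'0 mc by (simp add: divide_le_eq_1)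
    ultimately show False by simp
  qed
  define a where "a k = (\<lambda>i. (Gop m E ^^ k) (\<lambda>_. 1) i / \<rho> ^ k)" for k
  define v where "v i = (\<Sum>k<n. a k i)" for i
  have ann: "0 \<le> a k i" if "i < m" for k i
  proof -
    have "0 \<le> (Gop m E ^^ k) (\<lambda>_. 1) i" using that
    proof (induction k arbitrary: i)
      case 0 thus ?case by simp
    next
      case (Suc k) thus ?case by (simp add: Gop_nonneg)
    qed
    thus ?thesis unfolding a_def using rho0 by simp
  qed
  have an: "a n i \<le> 1" if i: "i < m" for i
  proof -
    have "a n i \<le> m * (c * r ^ n) / \<rho> ^ n" unfolding a_def using bound[OF i] rho0
      by (simp add: divide_right_mono)
    also have "\<dots> \<le> m * (c' * r ^ n) / \<rho> ^ n" unfolding c'_def using rho0 r0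
      by (intro divide_right_mono mult_left_mono mult_right_mono) auto
    also have "\<dots> = m * c' * (r / \<rho>) ^ n" by (simp add: power_divide)
    also have "\<dots> \<le> m * c' * (1 / (m * c' + 1))" using n c'0 by (intro mult_left_mono) auto
    also have "\<dots> \<le> 1" using c'0 mc by (simp add: divide_le_eq_1)
    finally show ?thesis .
  qed
  have aS: "Gop m E (a k) i = \<rho> * a (Suc k) i" for k i
  proof -
    have "Gop m E (a k) i = Gop m E ((Gop m E ^^ k) (\<lambda>_. 1)) i / \<rho> ^ k"
      unfolding a_def using Gop_cmult[of m E "1 / \<rho> ^ k" "(Gop m E ^^ k) (\<lambda>_. 1)" i] by simp
    also have "\<dots> = \<rho> * a (Suc k) i" unfolding a_def using rho0 by simp
    finally show ?thesis .
  qed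
  have "1 \<le> v i \<and> Gop m E v i \<le> \<rho> * v i" if i: "i < m" for i
  proof
    have "a 0 i \<le> v i" unfolding v_def using \<open>n \<noteq> 0\<close> ann[OF i]
      by (intro member_le_sum) auto
    thus "1 \<le> v i" unfolding a_def by simp
    have "Gop m E v i = (\<Sum>k<n. Gop m E (a k) i)" unfolding v_def by (rule Gop_sum)
    also have "\<dots> = \<rho> * (\<Sum>k<n. a (Suc k) i)" by (simp add: aS sum_distrib_left)
    also have "(\<Sum>k<n. a (Suc k) i) = v i - a 0 i + a n i"
      unfolding v_def using sum.lessThan_Suc_shift[of "\<lambda>k. a k i" n] by simp
    also have "\<dots> \<le> v i" using an[OF i] unfolding a_def by simp
    finally show "Gop m E v i \<le> \<rho> * v i" using rho0 by simp
  qed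
  thus ?thesis by blast
qed




locale chain =
  fixes m :: nat and E :: "nat \<Rightarrow> nat \<Rightarrow> bool" and \<beta> \<beta>int :: "nat \<Rightarrow> real" and \<delta> :: real
  assumes bpos: "\<And>n. 0 < \<beta> n" and bipos: "\<And>n. 0 < \<beta>int n" and dpos: "0 < \<delta>"
begin

abbreviation "P \<equiv> jump_prob m E \<beta> \<beta>int \<delta>"
abbreviation "mu \<equiv> jump_dist m E \<beta> \<beta>int \<delta>"
abbreviation "h \<equiv> mean_hold m E \<beta> \<beta>int \<delta>"
abbreviation "q \<equiv> total_rate m E \<beta> \<beta>int \<delta>"
abbreviation "up \<equiv> up_rate m E \<beta> \<beta>int"
abbreviation "dn \<equiv> down_rate \<delta>"
abbreviation "tot \<equiv> total_inf m"
abbreviation "ls \<equiv> loc_state m"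

lemma tot_upd: "u < m \<Longrightarrow> tot (x(u := a)) + x u = tot x + a"
proof -
  assume u: "u < m"
  have "tot (x(u := a)) = a + (\<Sum>v\<in>{..<m} - {u}. x v)"
    unfolding total_inf_def using u by (subst sum.remove[of _ u]) auto
  moreover have "tot x = x u + (\<Sum>v\<in>{..<m} - {u}. x v)"
    unfolding total_inf_def using u by (subst sum.remove[of _ u]) auto
  ultimately show ?thesis by simp
qed

lemma tot_up: "u < m \<Longrightarrow> tot (x(u := x u + 1)) = tot x + 1"
  using tot_upd[of u x "x u + 1"] by simp

lemma tot_down: "u < m \<Longrightarrow> 0 < x u \<Longrightarrow> tot (x(u := x u - 1)) + 1 = tot x"
  using tot_upd[of u x "x u - 1"] by simp

lemma ls_upd: "ls x \<Longrightarrow> u < m \<Longrightarrow> ls (x(u := a))"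
  unfolding loc_state_def by auto

lemma ls_zero_iff: "ls x \<Longrightarrow> x = (\<lambda>_. 0) \<longleftrightarrow> tot x = 0"
  unfolding loc_state_def total_inf_def
  by (auto simp: fun_eq_iff) (meson lessThan_iff not_le)

lemma up_nonneg: "0 \<le> up x u"
  unfolding up_rate_def using bpos[of "tot x"] bipos[of "tot x"]
  by (auto intro!: add_nonneg_nonneg sum_nonneg mult_nonneg_nonneg)

lemma dn_nonneg: "0 \<le> dn x u"
  unfolding down_rate_def using dpos by simp

lemma q_eq: "q x = (\<Sum>u<m. up x u) + \<delta> * tot x"
  unfolding total_rate_def down_rate_def total_inf_def
  by (simp add: sum.distrib sum_distrib_left)

lemma q_pos: "ls x \<Longrightarrow> x \<noteq> (\<lambda>_. 0) \<Longrightarrow> 0 < q x"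
proof -
  assume "ls x" "x \<noteq> (\<lambda>_. 0)"
  hence "0 < tot x" using ls_zero_iff by auto
  moreover have "0 \<le> (\<Sum>u<m. up x u)" using up_nonneg by (simp add: sum_nonneg)
  ultimately show ?thesis unfolding q_eq using dpos by (simp add: add_nonneg_pos)
qed

lemma int_single: "(\<integral>\<^sup>+y. (if y = a then c else 0) * F y \<partial>count_space UNIV) = c * F a"
  by (subst nn_integral_count_space'[of "{a}"]) auto

lemma P_integral:
  assumes "ls x" "x \<noteq> (\<lambda>_. 0)"
  shows "(\<integral>\<^sup>+y. P x y * F y \<partial>count_space UNIV) =
     (\<Sum>u<m. ennreal (up x u / q x) * F (x(u := x u + 1)) + ennreal (dn x u / q x) * F (x(u := x u - 1)))"
proof -
  have "(\<integral>\<^sup>+y. P x y * F y \<partial>count_space UNIV) =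
     (\<integral>\<^sup>+y. (\<Sum>u<m. (if y = x(u := x u + 1) then ennreal (up x u / q x) else 0) * F y
        + (if 0 < x u \<and> y = x(u := x u - 1) then ennreal (dn x u / q x) else 0) * F y) \<partial>count_space UNIV)"
    unfolding jump_prob_def using assms by (simp add: sum_distrib_right distrib_right)
  also have "\<dots> = (\<Sum>u<m. (\<integral>\<^sup>+y. (if y = x(u := x u + 1) then ennreal (up x u / q x) else 0) * F y \<partial>count_space UNIV)
        + (\<integral>\<^sup>+y. (if 0 < x u \<and> y = x(u := x u - 1) then ennreal (dn x u / q x) else 0) * F y \<partial>count_space UNIV))"
    by (simp add: nn_integral_sum nn_integral_add)
  also have "\<dots> = (\<Sum>u<m. ennreal (up x u / q x) * F (x(u := x u + 1)) + ennreal (dn x u / q x) * F (x(u := x u - 1)))"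
  proof (intro sum.cong refl arg_cong2[where f = "(+)"])
    fix u
    show "(\<integral>\<^sup>+y. (if y = x(u := x u + 1) then ennreal (up x u / q x) else 0) * F y \<partial>count_space UNIV)
      = ennreal (up x u / q x) * F (x(u := x u + 1))" by (rule int_single)
    show "(\<integral>\<^sup>+y. (if 0 < x u \<and> y = x(u := x u - 1) then ennreal (dn x u / q x) else 0) * F y \<partial>count_space UNIV)
      = ennreal (dn x u / q x) * F (x(u := x u - 1))"
    proof (cases "0 < x u")
      case True thus ?thesis using int_single[of "x(u := x u - 1)" "ennreal (dn x u / q x)" F] by simp
    next
      case False thus ?thesis by (simp add: down_rate_def)
    qed
  qed
  finally show ?thesis .
qed

lemma P_zero: "(\<integral>\<^sup>+y. P (\<lambda>_. 0) y * F y \<partial>count_space UNIV) = F (\<lambda>_. 0)"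
  unfolding jump_prob_def using int_single[of "\<lambda>_. 0" 1 F] by simp

lemma P_support:
  assumes "ls x" "P x y \<noteq> 0"
  shows "ls y \<and> tot y \<le> tot x + 1"
proof (cases "x = (\<lambda>_. 0)")
  case True thus ?thesis using assms unfolding jump_prob_def by (auto split: if_splits)
next
  case False
  with assms(2) obtain u where u: "u < m" and
    "(if y = x(u := x u + 1) then ennreal (up x u / q x) else 0)
        + (if 0 < x u \<and> y = x(u := x u - 1) then ennreal (dn x u / q x) else 0) \<noteq> 0"
    unfolding jump_prob_def by (auto elim!: sum.not_neutral_contains_not_neutral)
  hence "y = x(u := x u + 1) \<or> (0 < x u \<and> y = x(u := x u - 1))" by (auto split: if_splits)
  thus ?thesis using u assms(1) ls_upd tot_up[OF u, of x] tot_down[OF u, of x] by auto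
qed

lemma mu_support:
  assumes X: "ls X"
  shows "mu X n y \<noteq> 0 \<Longrightarrow> ls y \<and> tot y \<le> tot X + n"
proof (induction n arbitrary: y)
  case 0 thus ?case using X by (simp split: if_splits)
next
  case (Suc n)
  have "\<exists>x. mu X n x * P x y \<noteq> 0"
  proof (rule ccontr)
    assume "\<not> ?thesis"
    hence "(\<lambda>x. mu X n x * P x y) = (\<lambda>_. 0)" by auto
    hence "mu X (Suc n) y = 0" by simp
    thus False using Suc by simp
  qed
  then obtain x where "mu X n x \<noteq> 0" "P x y \<noteq> 0" by auto
  thus ?case using Suc.IH P_support by fastforce
qed

lemma finite_states: "finite {y. ls y \<and> tot y \<le> K}"
proof -
  have "{y. ls y \<and> tot y \<le> K} \<subseteq> (\<lambda>g u. if u < m then g u else 0) ` (PiE {..<m} (\<lambda>_. {..K}))"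
  proof
    fix y assume y: "y \<in> {y. ls y \<and> tot y \<le> K}"
    have "y u \<le> K" if "u < m" for u
    proof -
      have "y u \<le> tot y" unfolding total_inf_def using that by (intro member_le_sum) auto
      thus ?thesis using y by simp
    qed
    hence "restrict y {..<m} \<in> PiE {..<m} (\<lambda>_. {..K})" by auto
    moreover have "y = (\<lambda>u. if u < m then restrict y {..<m} u else 0)"
      using y unfolding loc_state_def by (auto simp: fun_eq_iff)
    ultimately show "y \<in> (\<lambda>g u. if u < m then g u else 0) ` (PiE {..<m} (\<lambda>_. {..K}))" by blast
  qed
  thus ?thesis by (rule finite_subset) (intro finite_imageI finite_PiE, auto)
qed

lemma mu_sum:
  assumes X: "ls X"
  shows "(\<integral>\<^sup>+x. mu X n x * G x \<partial>count_space UNIV) = (\<Sum>x\<in>{y. ls y \<and> tot y \<le> tot X + n}. mu X n x * G x)"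
  by (rule nn_integral_count_space') (use finite_states mu_support[OF X] in auto)

lemma mu_step:
  assumes X: "ls X"
  shows "(\<integral>\<^sup>+y. mu X (Suc n) y * F y \<partial>count_space UNIV) =
    (\<integral>\<^sup>+x. mu X n x * (\<integral>\<^sup>+y. P x y * F y \<partial>count_space UNIV) \<partial>count_space UNIV)"
proof -
  let ?S = "{y. ls y \<and> tot y \<le> tot X + n}"
  have "(\<integral>\<^sup>+y. mu X (Suc n) y * F y \<partial>count_space UNIV) =
     (\<integral>\<^sup>+y. (\<Sum>x\<in>?S. mu X n x * P x y) * F y \<partial>count_space UNIV)"
    by (simp add: mu_sum[OF X])
  also have "\<dots> = (\<integral>\<^sup>+y. (\<Sum>x\<in>?S. mu X n x * (P x y * F y)) \<partial>count_space UNIV)"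
    by (simp add: sum_distrib_right mult.assoc)
  also have "\<dots> = (\<Sum>x\<in>?S. \<integral>\<^sup>+y. mu X n x * (P x y * F y) \<partial>count_space UNIV)"
    by (rule nn_integral_sum) auto
  also have "\<dots> = (\<Sum>x\<in>?S. mu X n x * (\<integral>\<^sup>+y. P x y * F y \<partial>count_space UNIV))"
    by (simp add: nn_integral_cmult)
  also have "\<dots> = (\<integral>\<^sup>+x. mu X n x * (\<integral>\<^sup>+y. P x y * F y \<partial>count_space UNIV) \<partial>count_space UNIV)"
    by (simp add: mu_sum[OF X])
  finally show ?thesis .
qed

lemma hitting_upper:
  assumes X: "ls X"
    and V: "\<And>x. ls x \<Longrightarrow> h x + (\<integral>\<^sup>+y. P x y * V y \<partial>count_space UNIV) \<le> V x"
  shows "expected_hitting_time m E \<beta> \<beta>int \<delta> X \<le> V X"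
proof -
  let ?a = "\<lambda>k. \<integral>\<^sup>+x. mu X k x * h x \<partial>count_space UNIV"
  have claim: "(\<Sum>k<N. ?a k) + (\<integral>\<^sup>+x. mu X N x * V x \<partial>count_space UNIV) \<le> V X" for N
  proof (induction N)
    case 0
    show ?case using int_single[of X 1 V] by (simp add: eq_commute[of _ X])
  next
    case (Suc N)
    have st: "(\<integral>\<^sup>+x. mu X (Suc N) x * V x \<partial>count_space UNIV) =
      (\<integral>\<^sup>+x. mu X N x * (\<integral>\<^sup>+y. P x y * V y \<partial>count_space UNIV) \<partial>count_space UNIV)"
      by (rule mu_step[OF X])
    have "?a N + (\<integral>\<^sup>+x. mu X (Suc N) x * V x \<partial>count_space UNIV)
       = (\<integral>\<^sup>+x. mu X N x * h x + mu X N x * (\<integral>\<^sup>+y. P x y * V y \<partial>count_space UNIV) \<partial>count_space UNIV)"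
      unfolding st by (rule nn_integral_add[symmetric]) auto
    also have "\<dots> \<le> (\<integral>\<^sup>+x. mu X N x * V x \<partial>count_space UNIV)"
    proof (rule nn_integral_mono)
      fix x
      show "mu X N x * h x + mu X N x * (\<integral>\<^sup>+y. P x y * V y \<partial>count_space UNIV) \<le> mu X N x * V x"
      proof (cases "mu X N x = 0")
        case True thus ?thesis by simp
      next
        case False
        hence "ls x" using mu_support[OF X] by auto
        hence "mu X N x * (h x + (\<integral>\<^sup>+y. P x y * V y \<partial>count_space UNIV)) \<le> mu X N x * V x"
          using V[of x] by (intro mult_left_mono) auto
        thus ?thesis by (simp add: distrib_left)
      qed
    qed
    finally have step: "?a N + (\<integral>\<^sup>+x. mu X (Suc N) x * V x \<partial>count_space UNIV)
       \<le> (\<integral>\<^sup>+x. mu X N x * V x \<partial>count_space UNIV)" .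
    have "(\<Sum>k<Suc N. ?a k) + (\<integral>\<^sup>+x. mu X (Suc N) x * V x \<partial>count_space UNIV)
       = (\<Sum>k<N. ?a k) + (?a N + (\<integral>\<^sup>+x. mu X (Suc N) x * V x \<partial>count_space UNIV))"
      by (simp add: add.assoc)
    also have "\<dots> \<le> (\<Sum>k<N. ?a k) + (\<integral>\<^sup>+x. mu X N x * V x \<partial>count_space UNIV)"
      by (rule add_left_mono[OF step])
    also have "\<dots> \<le> V X" by (rule Suc)
    finally show ?case .
  qed
  show ?thesis unfolding expected_hitting_time_def
  proof (rule suminf_le_const)
    show "summable ?a" by simp
    fix N show "(\<Sum>k<N. ?a k) \<le> V X" by (rule order_trans[OF _ claim[of N]]) simp
  qed
qed
lemma sub_mono:
  assumes X: "ls X"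
    and f: "\<And>x. ls x \<Longrightarrow> f x \<le> (\<integral>\<^sup>+y. P x y * f y \<partial>count_space UNIV)"
  shows "(\<integral>\<^sup>+x. mu X n x * f x \<partial>count_space UNIV) \<le> (\<integral>\<^sup>+x. mu X (Suc n) x * f x \<partial>count_space UNIV)"
  unfolding mu_step[OF X]
proof (rule nn_integral_mono)
  fix x
  show "mu X n x * f x \<le> mu X n x * (\<integral>\<^sup>+y. P x y * f y \<partial>count_space UNIV)"
  proof (cases "mu X n x = 0")
    case True thus ?thesis by simp
  next
    case False
    hence "ls x" using mu_support[OF X] by auto
    thus ?thesis using f[of x] by (simp add: mult_left_mono)
  qed
qed

end



context chain begin

lemma q_sum: "q x = (\<Sum>u<m. up x u + dn x u)"
  unfolding total_rate_def ..

lemma ennreal_add_le: "ennreal (a + b) \<le> ennreal a + ennreal b"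
proof (cases "0 \<le> a")
  case True
  show ?thesis
  proof (cases "0 \<le> b")
    case True with \<open>0 \<le> a\<close> show ?thesis by (simp add: ennreal_plus)
  next
    case False
    hence "ennreal (a + b) \<le> ennreal a" by (intro ennreal_leI) simp
    thus ?thesis by (rule order_trans) simp
  qed
next
  case False
  hence "ennreal (a + b) \<le> ennreal b" by (intro ennreal_leI) simp
  thus ?thesis by (rule order_trans) simp
qed

lemma ennreal_sum_le: "ennreal (\<Sum>i\<in>I. f i) \<le> (\<Sum>i\<in>I. ennreal (f i))"
proof (induction I rule: infinite_finite_induct)
  case (insert a I)
  have "ennreal (\<Sum>i\<in>insert a I. f i) = ennreal (f a + (\<Sum>i\<in>I. f i))" using insert by simp
  also have "\<dots> \<le> ennreal (f a) + ennreal (\<Sum>i\<in>I. f i)" by (rule ennreal_add_le)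
  also have "\<dots> \<le> ennreal (f a) + (\<Sum>i\<in>I. ennreal (f i))" using insert by (intro add_left_mono) auto
  finally show ?case using insert by simp
qed auto

lemma sum_drift: "(\<Sum>u\<in>A. a u * (f u - c) + b u * (g u - (c::real))) = (\<Sum>u\<in>A. a u * f u + b u * g u) - (\<Sum>u\<in>A. a u + b u) * c"
  by (induction A rule: infinite_finite_induct) (auto simp: algebra_simps)

lemma drift_upper:
  assumes x: "ls x" and V0: "\<And>y. 0 \<le> V y"
    and D: "x \<noteq> (\<lambda>_. 0) \<Longrightarrow> 1 + (\<Sum>u<m. up x u * (V (x(u := x u + 1)) - V x) + dn x u * (V (x(u := x u - 1)) - V x)) \<le> 0"
  shows "h x + (\<integral>\<^sup>+y. P x y * ennreal (V y) \<partial>count_space UNIV) \<le> ennreal (V x)"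
proof (cases "x = (\<lambda>_. 0)")
  case True thus ?thesis by (simp add: P_zero mean_hold_def)
next
  case False
  have q0: "0 < q x" using q_pos[OF x False] .
  let ?S = "\<Sum>u<m. up x u / q x * V (x(u := x u + 1)) + dn x u / q x * V (x(u := x u - 1))"
  have a: "0 \<le> up x u / q x" "0 \<le> dn x u / q x" for u using up_nonneg dn_nonneg q0 by auto
  have b: "0 \<le> up x u / q x * V (x(u := x u + 1))" "0 \<le> dn x u / q x * V (x(u := x u - 1))" for u
    by (intro mult_nonneg_nonneg a V0)+
  have "(\<integral>\<^sup>+y. P x y * ennreal (V y) \<partial>count_space UNIV) =
     (\<Sum>u<m. ennreal (up x u / q x) * ennreal (V (x(u := x u + 1))) + ennreal (dn x u / q x) * ennreal (V (x(u := x u - 1))))"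
    by (rule P_integral[OF x False])
  also have "\<dots> = (\<Sum>u<m. ennreal (up x u / q x * V (x(u := x u + 1)) + dn x u / q x * V (x(u := x u - 1))))"
  proof (rule sum.cong[OF refl])
    fix u
    show "ennreal (up x u / q x) * ennreal (V (x(u := x u + 1))) + ennreal (dn x u / q x) * ennreal (V (x(u := x u - 1)))
      = ennreal (up x u / q x * V (x(u := x u + 1)) + dn x u / q x * V (x(u := x u - 1)))"
      by (simp only: ennreal_plus[OF b(1)[of u] b(2)[of u]] ennreal_mult'[OF a(1)[of u]] ennreal_mult'[OF a(2)[of u]])
  qed
  also have "\<dots> = ennreal ?S" by (rule sum_ennreal) (use b in \<open>auto intro: add_nonneg_nonneg\<close>)
  finally have I: "(\<integral>\<^sup>+y. P x y * ennreal (V y) \<partial>count_space UNIV) = ennreal ?S" .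
  have H: "h x = ennreal (1 / q x)" unfolding mean_hold_def using False by simp
  have S0: "0 \<le> ?S" using b by (auto intro!: sum_nonneg add_nonneg_nonneg)
  have le: "1 / q x + ?S \<le> V x"
  proof -
    have S_eq: "?S = (\<Sum>u<m. up x u * V (x(u := x u + 1)) + dn x u * V (x(u := x u - 1))) / q x"
      by (simp add: sum_divide_distrib add_divide_distrib)
    have T: "(\<Sum>u<m. up x u * V (x(u := x u + 1)) + dn x u * V (x(u := x u - 1))) - q x * V x
       = (\<Sum>u<m. up x u * (V (x(u := x u + 1)) - V x) + dn x u * (V (x(u := x u - 1)) - V x))"
      unfolding sum_drift q_sum by simp
    have "1 / q x + ?S - V x = (1 + ((\<Sum>u<m. up x u * V (x(u := x u + 1)) + dn x u * V (x(u := x u - 1))) - q x * V x)) / q x"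
      unfolding S_eq using q0 by (simp add: field_simps)
    also have "\<dots> = (1 + (\<Sum>u<m. up x u * (V (x(u := x u + 1)) - V x) + dn x u * (V (x(u := x u - 1)) - V x))) / q x"
      unfolding T ..
    also have "\<dots> \<le> 0" using D[OF False] q0 by (simp add: divide_nonpos_pos)
    finally show ?thesis by simp
  qed
  have "h x + (\<integral>\<^sup>+y. P x y * ennreal (V y) \<partial>count_space UNIV) = ennreal (1 / q x + ?S)"
    unfolding I H using q0 S0 by (simp add: ennreal_plus)
  also have "\<dots> \<le> ennreal (V x)" by (rule ennreal_leI[OF le])
  finally show ?thesis .
qed

lemma drift_lower:
  assumes x: "ls x"
    and D: "x \<noteq> (\<lambda>_. 0) \<Longrightarrow> 0 < g x \<Longrightarrow> 0 \<le> (\<Sum>u<m. up x u * (g (x(u := x u + 1)) - g x) + dn x u * (g (x(u := x u - 1)) - g x))"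
  shows "ennreal (g x) \<le> (\<integral>\<^sup>+y. P x y * ennreal (g y) \<partial>count_space UNIV)"
proof (cases "x = (\<lambda>_. 0)")
  case True thus ?thesis by (simp add: P_zero)
next
  case False
  show ?thesis
  proof (cases "0 < g x")
    case False thus ?thesis by (simp add: ennreal_neg)
  next
    case gpos: True
    have q0: "0 < q x" using q_pos[OF x False] .
    let ?S = "\<Sum>u<m. up x u / q x * g (x(u := x u + 1)) + dn x u / q x * g (x(u := x u - 1))"
    have "ennreal ?S \<le> (\<Sum>u<m. ennreal (up x u / q x * g (x(u := x u + 1)) + dn x u / q x * g (x(u := x u - 1))))"
      by (rule ennreal_sum_le)
    also have "\<dots> \<le> (\<Sum>u<m. ennreal (up x u / q x) * ennreal (g (x(u := x u + 1))) + ennreal (dn x u / q x) * ennreal (g (x(u := x u - 1))))"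
    proof (rule sum_mono)
      fix u
      have a: "0 \<le> up x u / q x" "0 \<le> dn x u / q x" using up_nonneg dn_nonneg q0 by auto
      have "ennreal (up x u / q x * g (x(u := x u + 1)) + dn x u / q x * g (x(u := x u - 1)))
          \<le> ennreal (up x u / q x * g (x(u := x u + 1))) + ennreal (dn x u / q x * g (x(u := x u - 1)))"
        using ennreal_sum_le[of "\<lambda>i. if i = (0::nat) then up x u / q x * g (x(u := x u + 1)) else dn x u / q x * g (x(u := x u - 1))" "{0,1}"]
        by simp
      also have "\<dots> = ennreal (up x u / q x) * ennreal (g (x(u := x u + 1))) + ennreal (dn x u / q x) * ennreal (g (x(u := x u - 1)))"
        by (simp only: ennreal_mult'[OF a(1)] ennreal_mult'[OF a(2)])
      finally show "ennreal (up x u / q x * g (x(u := x u + 1)) + dn x u / q x * g (x(u := x u - 1)))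
          \<le> ennreal (up x u / q x) * ennreal (g (x(u := x u + 1))) + ennreal (dn x u / q x) * ennreal (g (x(u := x u - 1)))" .
    qed
    also have "\<dots> = (\<integral>\<^sup>+y. P x y * ennreal (g y) \<partial>count_space UNIV)"
      unfolding P_integral[OF x False] ..
    finally have 1: "ennreal ?S \<le> (\<integral>\<^sup>+y. P x y * ennreal (g y) \<partial>count_space UNIV)" .
    have S_eq: "?S = (\<Sum>u<m. up x u * g (x(u := x u + 1)) + dn x u * g (x(u := x u - 1))) / q x"
      by (simp add: sum_divide_distrib add_divide_distrib)
    have T: "(\<Sum>u<m. up x u * g (x(u := x u + 1)) + dn x u * g (x(u := x u - 1))) - q x * g x
       = (\<Sum>u<m. up x u * (g (x(u := x u + 1)) - g x) + dn x u * (g (x(u := x u - 1)) - g x))"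
      unfolding sum_drift q_sum by simp
    have "?S - g x = ((\<Sum>u<m. up x u * g (x(u := x u + 1)) + dn x u * g (x(u := x u - 1))) - q x * g x) / q x"
      unfolding S_eq using q0 by (simp add: field_simps)
    also have "\<dots> = (\<Sum>u<m. up x u * (g (x(u := x u + 1)) - g x) + dn x u * (g (x(u := x u - 1)) - g x)) / q x"
      unfolding T ..
    also have "\<dots> \<ge> 0" using D[OF False gpos] q0 by simp
    finally have "g x \<le> ?S" by simp
    hence "ennreal (g x) \<le> ennreal ?S" by (rule ennreal_leI)
    with 1 show ?thesis by simp
  qed
qed

end



definition wsum :: "nat \<Rightarrow> (nat \<Rightarrow> real) \<Rightarrow> (nat \<Rightarrow> nat) \<Rightarrow> real" where
  "wsum m v x = (\<Sum>u<m. v u * real (x u))"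

lemma ln_diff_le: "0 < (a::real) \<Longrightarrow> 0 < b \<Longrightarrow> ln b - ln a \<le> (b - a) / a"
proof -
  assume a: "0 < a" and b: "0 < b"
  have "ln b - ln a = ln (b / a)" using a b by (simp add: ln_div)
  also have "\<dots> \<le> b / a - 1" using a b by (intro ln_le_minus_one) auto
  also have "\<dots> = (b - a) / a" using a by (simp add: field_simps)
  finally show ?thesis .
qed

lemma exp_neg_bound: "0 \<le> (t::real) \<Longrightarrow> t - t\<^sup>2 \<le> 1 - exp (- t)"
proof -
  assume t: "0 \<le> t"
  have "1 + t \<le> exp t" by (rule exp_ge_add_one_self)
  hence "exp (- t) \<le> 1 / (1 + t)" using t by (simp add: exp_minus field_simps)
  also have "\<dots> \<le> 1 - t + t\<^sup>2"
  proof -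
    have "1 \<le> (1 + t) * (1 - t + t\<^sup>2)" using t by (simp add: algebra_simps power2_eq_square power3_eq_cube)
    thus ?thesis using t by (simp add: field_simps)
  qed
  finally show ?thesis by simp
qed

lemma exp_pos_bound: "0 \<le> (t::real) \<Longrightarrow> t \<le> 1 \<Longrightarrow> - t - t\<^sup>2 \<le> 1 - exp t"
  using exp_bound[of t] by simp

context chain begin

lemma wsum_upd: "u < m \<Longrightarrow> wsum m v (x(u := a)) = wsum m v x - v u * real (x u) + v u * real a"
proof -
  assume u: "u < m"
  have "wsum m v (x(u := a)) = v u * real a + (\<Sum>j\<in>{..<m} - {u}. v j * real (x j))"
    unfolding wsum_def using u by (subst sum.remove[of _ u]) auto
  moreover have "wsum m v x = v u * real (x u) + (\<Sum>j\<in>{..<m} - {u}. v j * real (x j))"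
    unfolding wsum_def using u by (subst sum.remove[of _ u]) auto
  ultimately show ?thesis by simp
qed

lemma wsum_up: "u < m \<Longrightarrow> wsum m v (x(u := x u + 1)) = wsum m v x + v u"
  by (simp add: wsum_upd algebra_simps)

lemma wsum_down: "u < m \<Longrightarrow> 0 < x u \<Longrightarrow> wsum m v (x(u := x u - 1)) = wsum m v x - v u"
  by (simp add: wsum_upd algebra_simps of_nat_diff)

lemma wsum_ge: "(\<And>i. i < m \<Longrightarrow> 1 \<le> v i) \<Longrightarrow> real (tot x) \<le> wsum m v x"
proof -
  assume v: "\<And>i. i < m \<Longrightarrow> 1 \<le> v i"
  have "real (tot x) = (\<Sum>u<m. 1 * real (x u))" unfolding total_inf_def by (simp add: of_nat_sum)
  also have "\<dots> \<le> wsum m v x" unfolding wsum_def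
    by (intro sum_mono mult_right_mono) (use v in auto)
  finally show ?thesis .
qed

lemma wsum_le: "(\<And>i. i < m \<Longrightarrow> v i \<le> W) \<Longrightarrow> wsum m v x \<le> W * real (tot x)"
  unfolding wsum_def total_inf_def by (simp add: of_nat_sum sum_distrib_left) (intro sum_mono, simp add: mult_right_mono)

lemma wsum_term: "(\<And>i. i < m \<Longrightarrow> 0 \<le> v i) \<Longrightarrow> u < m \<Longrightarrow> v u * real (x u) \<le> wsum m v x"
  unfolding wsum_def by (rule member_le_sum) auto

lemma sum_dn: "(\<Sum>u<m. dn x u) = \<delta> * real (tot x)"
  unfolding down_rate_def total_inf_def by (simp add: sum_distrib_left)

lemma sum_v_dn: "(\<Sum>u<m. v u * dn x u) = \<delta> * wsum m v x"
  unfolding down_rate_def wsum_def by (simp add: sum_distrib_left algebra_simps)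

lemma sum_v_up:
  assumes g: "simple_graph_on m E"
  shows "(\<Sum>u<m. v u * up x u) = \<beta> (tot x) * (\<Sum>j<m. real (x j) * Gop m E v j) + \<beta>int (tot x) * wsum m v x"
proof -
  let ?n = "tot x"
  have "(\<Sum>u<m. v u * up x u) = (\<Sum>u<m. \<Sum>j<m. if E u j then \<beta> ?n * (v u * real (x j)) else 0)
      + \<beta>int ?n * wsum m v x"
    unfolding up_rate_def wsum_def
    by (simp add: distrib_left sum.distrib sum_distrib_left algebra_simps if_distrib cong: if_cong)
  also have "(\<Sum>u<m. \<Sum>j<m. if E u j then \<beta> ?n * (v u * real (x j)) else 0)
      = (\<Sum>j<m. \<Sum>u<m. if E u j then \<beta> ?n * (v u * real (x j)) else 0)" by (rule sum.swap)
  also have "\<dots> = (\<Sum>j<m. \<beta> ?n * (real (x j) * Gop m E v j))"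
  proof (rule sum.cong[OF refl])
    fix j assume j: "j \<in> {..<m}"
    have "(\<Sum>u<m. if E u j then \<beta> ?n * (v u * real (x j)) else 0)
        = (\<Sum>u<m. \<beta> ?n * real (x j) * (if E j u then v u else 0))"
      using g j unfolding simple_graph_on_def by (intro sum.cong refl) auto
    also have "\<dots> = \<beta> ?n * (real (x j) * Gop m E v j)" unfolding Gop_def by (simp add: sum_distrib_left mult.assoc)
    finally show "(\<Sum>u<m. if E u j then \<beta> ?n * (v u * real (x j)) else 0) = \<beta> ?n * (real (x j) * Gop m E v j)" .
  qed
  also have "\<dots> = \<beta> ?n * (\<Sum>j<m. real (x j) * Gop m E v j)" by (simp add: sum_distrib_left)
  finally show ?thesis .
qed

lemma sum_up_le:
  assumes bB: "\<And>n. \<beta> n \<le> B" and bBi: "\<And>n. \<beta>int n \<le> Bi"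
  shows "(\<Sum>u<m. up x u) \<le> (B * m + Bi) * real (tot x)"
proof -
  let ?n = "tot x"
  have "up x u \<le> B * real ?n + Bi * real (x u)" for u
  proof -
    have "(\<Sum>j<m. if E u j then \<beta> ?n * real (x j) else 0) \<le> (\<Sum>j<m. \<beta> ?n * real (x j))"
      using bpos[of ?n] by (intro sum_mono) auto
    also have "\<dots> = \<beta> ?n * real ?n" unfolding total_inf_def by (simp add: sum_distrib_left)
    also have "\<dots> \<le> B * real ?n" using bB[of ?n] by (intro mult_right_mono) auto
    finally have 1: "(\<Sum>j<m. if E u j then \<beta> ?n * real (x j) else 0) \<le> B * real ?n" .
    have 2: "\<beta>int ?n * real (x u) \<le> Bi * real (x u)" using bBi[of ?n] by (intro mult_right_mono) auto
    show ?thesis unfolding up_rate_def using 1 2 by linarith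
  qed
  hence "(\<Sum>u<m. up x u) \<le> (\<Sum>u<m. B * real ?n + Bi * real (x u))" by (intro sum_mono)
  also have "\<dots> = (B * m + Bi) * real ?n" unfolding total_inf_def
    by (simp add: sum.distrib sum_distrib_left algebra_simps of_nat_sum)
  finally show ?thesis .
qed

lemma drift_i:
  assumes g: "simple_graph_on m E"
    and v1: "\<And>i. i < m \<Longrightarrow> 1 \<le> v i" and vG: "\<And>i. i < m \<Longrightarrow> Gop m E v i \<le> \<rho> * v i" and rho0: "0 \<le> \<rho>"
    and bB: "\<And>n. \<beta> n \<le> B" and bBi: "\<And>n. \<beta>int n \<le> Bi"
    and eps: "0 < \<epsilon>" and sub: "\<And>n. N0 < n \<Longrightarrow> \<beta> n * \<rho> + \<beta>int n \<le> \<delta> - \<epsilon>"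
    and c_def: "c = 2 / \<epsilon>"
    and th_def: "\<theta> = \<delta> / (2 * (B * m + Bi + \<delta>))"
    and K_def: "K = 2 * (1 + c * (B * \<rho> + Bi)) / (\<theta> ^ N0 * (1 - \<theta>) * \<delta>)"
    and V_def: "V = (\<lambda>y. c * ln (1 + wsum m v y) + K * (1 - \<theta> ^ min (tot y) (Suc N0)))"
    and x: "ls x" and x0: "x \<noteq> (\<lambda>_. 0)"
  shows "1 + (\<Sum>u<m. up x u * (V (x(u := x u + 1)) - V x) + dn x u * (V (x(u := x u - 1)) - V x)) \<le> 0"
proof -
  define n where "n = tot x"
  define w where "w = wsum m v x"
  define L where "L y = ln (1 + wsum m v y)" for y
  define \<phi> where "\<phi> k = K * (1 - \<theta> ^ min k (Suc N0))" for k
  have V_eq: "V y = c * L y + \<phi> (tot y)" for y unfolding V_def L_def \<phi>_def by simp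
  have n1: "1 \<le> n" using ls_zero_iff[OF x] x0 unfolding n_def by auto
  have wn: "real n \<le> w" unfolding n_def w_def by (rule wsum_ge[OF v1])
  have w1: "1 \<le> w" using n1 wn by linarith
  have v0: "\<And>i. i < m \<Longrightarrow> 0 \<le> v i" using v1 by (meson order_trans zero_le_one)
  have B0: "0 < B" using bpos[of 0] bB[of 0] by linarith
  have Bi0: "0 < Bi" using bipos[of 0] bBi[of 0] by linarith
  define R where "R = B * m + Bi"
  have R0: "0 \<le> R" unfolding R_def using B0 Bi0 by simp
  have th_R: "\<theta> = \<delta> / (2 * (R + \<delta>))" unfolding th_def R_def by simp
  have th0: "0 < \<theta>" unfolding th_R using R0 dpos by simp
  have th1: "\<theta> < 1" unfolding th_R using R0 dpos by (simp add: field_simps)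
  have thR: "R * \<theta> \<le> \<delta> / 2"
  proof -
    have "R * \<theta> = \<delta> / 2 * (R / (R + \<delta>))" unfolding th_R using R0 dpos by (simp add: field_simps)
    also have "\<dots> \<le> \<delta> / 2 * 1" using R0 dpos by (intro mult_left_mono) (auto simp: field_simps)
    finally show ?thesis by simp
  qed
  define M where "M = B * \<rho> + Bi"
  have M0: "0 \<le> M" unfolding M_def using B0 Bi0 rho0 by simp
  have c0: "0 < c" unfolding c_def using eps by simp
  have den0: "0 < \<theta> ^ N0 * (1 - \<theta>) * \<delta>" using th0 th1 dpos by simp
  have K0: "0 \<le> K" unfolding K_def using den0 c0 M0 M_def by (simp add: divide_nonneg_pos)
  have KK: "K * (\<theta> ^ N0 * (1 - \<theta>) * \<delta>) = 2 * (1 + c * M)" using th0 th1 dpos unfolding K_def M_def by (simp add: less_imp_neq[symmetric] less_imp_neq)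
  define LD where "LD = (\<Sum>u<m. up x u * (L (x(u := x u + 1)) - L x) + dn x u * (L (x(u := x u - 1)) - L x))"
  define PD where "PD = (\<Sum>u<m. up x u * (\<phi> (tot (x(u := x u + 1))) - \<phi> n) + dn x u * (\<phi> (tot (x(u := x u - 1))) - \<phi> n))"
  have dec: "(\<Sum>u<m. up x u * (V (x(u := x u + 1)) - V x) + dn x u * (V (x(u := x u - 1)) - V x)) = c * LD + PD"
  proof -
    have "(\<Sum>u<m. up x u * (V (x(u := x u + 1)) - V x) + dn x u * (V (x(u := x u - 1)) - V x))
      = (\<Sum>u<m. c * (up x u * (L (x(u := x u + 1)) - L x) + dn x u * (L (x(u := x u - 1)) - L x))
          + (up x u * (\<phi> (tot (x(u := x u + 1))) - \<phi> n) + dn x u * (\<phi> (tot (x(u := x u - 1))) - \<phi> n)))"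
      unfolding V_eq n_def by (intro sum.cong refl) (simp add: algebra_simps)
    also have "\<dots> = (\<Sum>u<m. c * (up x u * (L (x(u := x u + 1)) - L x) + dn x u * (L (x(u := x u - 1)) - L x)))
          + (\<Sum>u<m. up x u * (\<phi> (tot (x(u := x u + 1))) - \<phi> n) + dn x u * (\<phi> (tot (x(u := x u - 1))) - \<phi> n))"
      by (rule sum.distrib)
    also have "\<dots> = c * LD + PD" unfolding LD_def PD_def by (simp only: sum_distrib_left)
    finally show ?thesis .
  qed
  have LD_le: "LD \<le> (\<Sum>u<m. up x u * v u - dn x u * v u) / (1 + w)"
  proof -
    have "LD \<le> (\<Sum>u<m. (up x u * v u - dn x u * v u) / (1 + w))"
      unfolding LD_def
    proof (intro sum_mono)
      fix u assume u: "u \<in> {..<m}"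
      have 1: "up x u * (L (x(u := x u + 1)) - L x) \<le> up x u * (v u / (1 + w))"
      proof (intro mult_left_mono up_nonneg)
        have e: "wsum m v (x(u := x u + 1)) = wsum m v x + v u" by (rule wsum_up) (use u in auto)
        have "L (x(u := x u + 1)) - L x = ln (1 + w + v u) - ln (1 + w)"
          unfolding L_def w_def e by (simp add: add.assoc)
        also have "\<dots> \<le> ((1 + w + v u) - (1 + w)) / (1 + w)"
          using w1 v0[of u] u by (intro ln_diff_le) auto
        finally show "L (x(u := x u + 1)) - L x \<le> v u / (1 + w)" by simp
      qed
      have 2: "dn x u * (L (x(u := x u - 1)) - L x) \<le> dn x u * (- v u / (1 + w))"
      proof (cases "0 < x u")
        case True
        have vw: "v u \<le> w"
        proof -
          have "v u * 1 \<le> v u * real (x u)" using True v0[of u] u by (intro mult_left_mono) auto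
          also have "\<dots> \<le> w" unfolding w_def using v0 u by (intro wsum_term) auto
          finally show ?thesis by simp
        qed
        show ?thesis
        proof (intro mult_left_mono dn_nonneg)
          have e: "wsum m v (x(u := x u - 1)) = wsum m v x - v u" by (rule wsum_down) (use u True in auto)
          have "L (x(u := x u - 1)) - L x = ln (1 + w - v u) - ln (1 + w)"
            unfolding L_def w_def e by (simp add: add_diff_eq)
          also have "\<dots> \<le> ((1 + w - v u) - (1 + w)) / (1 + w)"
            using w1 vw by (intro ln_diff_le) auto
          finally show "L (x(u := x u - 1)) - L x \<le> - v u / (1 + w)" by simp
        qed
      next
        case False thus ?thesis by (simp add: down_rate_def)
      qed
      have "up x u * (L (x(u := x u + 1)) - L x) + dn x u * (L (x(u := x u - 1)) - L x)
          \<le> up x u * (v u / (1 + w)) + dn x u * (- v u / (1 + w))" using 1 2 by linarith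
      also have "\<dots> = (up x u * v u - dn x u * v u) / (1 + w)" by (simp add: diff_divide_distrib)
      finally show "up x u * (L (x(u := x u + 1)) - L x) + dn x u * (L (x(u := x u - 1)) - L x)
          \<le> (up x u * v u - dn x u * v u) / (1 + w)" .
    qed
    also have "\<dots> = (\<Sum>u<m. up x u * v u - dn x u * v u) / (1 + w)" by (simp add: sum_divide_distrib)
    finally show ?thesis .
  qed
  define a where "a = \<beta> n * \<rho> + \<beta>int n - \<delta>"
  have sum_le: "(\<Sum>u<m. up x u * v u - dn x u * v u) \<le> a * w"
  proof -
    have "(\<Sum>u<m. up x u * v u - dn x u * v u) = (\<Sum>u<m. v u * up x u) - (\<Sum>u<m. v u * dn x u)"
      by (simp add: sum_subtractf mult.commute)
    also have "\<dots> = \<beta> n * (\<Sum>j<m. real (x j) * Gop m E v j) + \<beta>int n * w - \<delta> * w"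
      unfolding sum_v_up[OF g] sum_v_dn n_def w_def ..
    also have "(\<Sum>j<m. real (x j) * Gop m E v j) \<le> \<rho> * w"
    proof -
      have "(\<Sum>j<m. real (x j) * Gop m E v j) \<le> (\<Sum>j<m. real (x j) * (\<rho> * v j))"
        using vG by (intro sum_mono mult_left_mono) auto
      also have "\<dots> = \<rho> * w" unfolding w_def wsum_def by (simp add: sum_distrib_left algebra_simps)
      finally show ?thesis .
    qed
    hence "\<beta> n * (\<Sum>j<m. real (x j) * Gop m E v j) \<le> \<beta> n * (\<rho> * w)"
      using bpos[of n] by (intro mult_left_mono) auto
    hence "\<beta> n * (\<Sum>j<m. real (x j) * Gop m E v j) + \<beta>int n * w - \<delta> * w \<le> \<beta> n * (\<rho> * w) + \<beta>int n * w - \<delta> * w"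
      by linarith
    also have "\<dots> = a * w" unfolding a_def by (simp add: algebra_simps)
    finally show ?thesis .
  qed
  have LD_a: "LD \<le> a * (w / (1 + w))"
  proof -
    have "LD \<le> (a * w) / (1 + w)" using LD_le sum_le w1 by (meson divide_right_mono order_trans le_add_same_cancel2 add_nonneg_nonneg zero_le_one order_trans[OF zero_le_one w1] order.trans)
    thus ?thesis by simp
  qed
  have t0: "0 \<le> w / (1 + w)" and t1: "w / (1 + w) \<le> 1" and t2: "1 / 2 \<le> w / (1 + w)"
    using w1 by (auto simp: field_simps)
  have PD_eq: "PD = (\<Sum>u<m. up x u) * (\<phi> (n + 1) - \<phi> n) + (\<Sum>u<m. dn x u) * (\<phi> (n - 1) - \<phi> n)"
  proof -
    have "PD = (\<Sum>u<m. up x u * (\<phi> (n + 1) - \<phi> n) + dn x u * (\<phi> (n - 1) - \<phi> n))"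
      unfolding PD_def
    proof (intro sum.cong refl)
      fix u assume u: "u \<in> {..<m}"
      have "tot (x(u := x u + 1)) = n + 1" using tot_up u n_def by auto
      moreover have "dn x u * (\<phi> (tot (x(u := x u - 1))) - \<phi> n) = dn x u * (\<phi> (n - 1) - \<phi> n)"
      proof (cases "0 < x u")
        case True
        hence "tot (x(u := x u - 1)) = n - 1" using tot_down[of u x] u n_def by auto
        thus ?thesis by simp
      next
        case False thus ?thesis by (simp add: down_rate_def)
      qed
      ultimately show "up x u * (\<phi> (tot (x(u := x u + 1))) - \<phi> n) + dn x u * (\<phi> (tot (x(u := x u - 1))) - \<phi> n)
         = up x u * (\<phi> (n + 1) - \<phi> n) + dn x u * (\<phi> (n - 1) - \<phi> n)" by simp
    qed
    also have "\<dots> = (\<Sum>u<m. up x u) * (\<phi> (n + 1) - \<phi> n) + (\<Sum>u<m. dn x u) * (\<phi> (n - 1) - \<phi> n)"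
      by (simp add: sum.distrib sum_distrib_right)
    finally show ?thesis .
  qed
  have U0: "0 \<le> (\<Sum>u<m. up x u)" using up_nonneg by (simp add: sum_nonneg)
  have UR: "(\<Sum>u<m. up x u) \<le> R * real n" unfolding R_def n_def by (rule sum_up_le[OF bB bBi])
  have D0: "(\<Sum>u<m. dn x u) = \<delta> * real n" unfolding n_def by (rule sum_dn)
  show ?thesis
  proof (cases "N0 < n")
    case True
    have "a \<le> - \<epsilon>" using sub[OF True] unfolding a_def by simp
    hence "a * (w / (1 + w)) \<le> - \<epsilon> * (w / (1 + w))" using t0 by (intro mult_right_mono) auto
    also have "\<dots> \<le> - \<epsilon> * (1 / 2)" using t2 eps by (intro mult_left_mono_neg) auto
    finally have LDb: "LD \<le> - \<epsilon> / 2" using LD_a by simp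
    have "min (n + 1) (Suc N0) = Suc N0" "min n (Suc N0) = Suc N0" using True by auto
    hence p1: "\<phi> (n + 1) = \<phi> n" unfolding \<phi>_def by simp
    have p2: "\<phi> (n - 1) \<le> \<phi> n" unfolding \<phi>_def
    proof (intro mult_left_mono K0 diff_left_mono power_decreasing)
      show "min (n - 1) (Suc N0) \<le> min n (Suc N0)" by simp
    qed (use th0 th1 in auto)
    have PDb: "PD \<le> 0" unfolding PD_eq p1 D0
      using p2 dpos by (simp add: mult_nonneg_nonpos)
    have "1 + (c * LD + PD) \<le> 1 + (c * (- \<epsilon> / 2) + 0)"
      using LDb PDb c0 by (intro add_left_mono add_mono mult_left_mono) auto
    also have "\<dots> = 0" unfolding c_def using eps by simp
    finally show ?thesis unfolding dec .
  next
    case False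
    hence nN: "n \<le> N0" by simp
    have LDb: "LD \<le> M"
    proof (cases "a \<le> 0")
      case True
      hence "a * (w / (1 + w)) \<le> 0" by (rule mult_nonpos_nonneg) (use t0 in auto)
      thus ?thesis using LD_a M0 by linarith
    next
      case False
      have "a \<le> M" unfolding a_def M_def using bB[of n] bBi[of n] rho0 dpos
        by (smt (verit) mult_right_mono)
      have "a * (w / (1 + w)) \<le> a * 1" using False t1 by (intro mult_left_mono) auto
      thus ?thesis using LD_a \<open>a \<le> M\<close> by linarith
    qed
    define t where "t = \<theta> ^ (n - 1)"
    have tn: "\<theta> ^ n = \<theta> * t" unfolding t_def using n1 by (metis Suc_diff_le diff_Suc_1 power_Suc)
    have t_ge: "\<theta> ^ N0 \<le> t" unfolding t_def using th0 th1 nN by (intro power_decreasing) auto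
    have p1: "\<phi> (n + 1) - \<phi> n = K * t * (\<theta> - \<theta> * \<theta>)"
    proof -
      have "\<phi> (n + 1) - \<phi> n = K * (\<theta> ^ n - \<theta> ^ (n + 1))" unfolding \<phi>_def using nN by (simp add: min_def algebra_simps)
      thus ?thesis using tn by (simp add: algebra_simps)
    qed
    have p2: "\<phi> (n - 1) - \<phi> n = - (K * t * (1 - \<theta>))"
    proof -
      have "\<phi> (n - 1) - \<phi> n = K * (\<theta> ^ n - \<theta> ^ (n - 1))" unfolding \<phi>_def using nN by (simp add: min_def algebra_simps)
      thus ?thesis using tn unfolding t_def by (simp add: algebra_simps)
    qed
    have Kt0: "0 \<le> K * t * (1 - \<theta>)" using K0 th0 th1 unfolding t_def by simp
    have "PD = K * t * (1 - \<theta>) * ((\<Sum>u<m. up x u) * \<theta> - \<delta> * real n)"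
      unfolding PD_eq p1 p2 D0 by (simp add: algebra_simps)
    also have "\<dots> \<le> K * t * (1 - \<theta>) * (- \<delta> / 2)"
    proof (intro mult_left_mono Kt0)
      have "(\<Sum>u<m. up x u) * \<theta> \<le> R * real n * \<theta>" using UR th0 by (intro mult_right_mono) auto
      also have "\<dots> = real n * (R * \<theta>)" by simp
      also have "\<dots> \<le> real n * (\<delta> / 2)" using thR by (intro mult_left_mono) auto
      finally have "(\<Sum>u<m. up x u) * \<theta> \<le> real n * (\<delta> / 2)" .
      hence "(\<Sum>u<m. up x u) * \<theta> - \<delta> * real n \<le> real n * (\<delta> / 2) - \<delta> * real n" by linarith
      also have "real n * (\<delta> / 2) - \<delta> * real n = - (\<delta> / 2) * real n" by (simp add: field_simps)
      also have "\<dots> \<le> - (\<delta> / 2) * 1" using n1 dpos by (intro mult_left_mono_neg) auto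
      finally show "(\<Sum>u<m. up x u) * \<theta> - \<delta> * real n \<le> - \<delta> / 2" by simp
    qed
    also have "\<dots> \<le> K * \<theta> ^ N0 * (1 - \<theta>) * (- \<delta> / 2)"
      using t_ge K0 th1 dpos by (intro mult_right_mono_neg mult_right_mono mult_left_mono) auto
    also have "\<dots> = - (1 + c * M)" using KK by (simp add: algebra_simps)
    finally have PDb: "PD \<le> - (1 + c * M)" .
    have "1 + (c * LD + PD) \<le> 1 + (c * M + - (1 + c * M))"
      using LDb PDb c0 by (intro add_left_mono add_mono mult_left_mono) auto
    also have "\<dots> = 0" by simp
    finally show ?thesis unfolding dec .
  qed
qed

lemma wsum_ge': "(\<And>i. i < m \<Longrightarrow> c \<le> v i) \<Longrightarrow> c * real (tot x) \<le> wsum m v x"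
  unfolding wsum_def total_inf_def by (simp add: of_nat_sum sum_distrib_left) (intro sum_mono, simp add: mult_right_mono)

lemma drift_ii:
  assumes g: "simple_graph_on m E"
    and vmin: "0 < vmin" and vlo: "\<And>i. i < m \<Longrightarrow> vmin \<le> v i" and vhi: "\<And>i. i < m \<Longrightarrow> v i \<le> W"
    and vG: "\<And>i. i < m \<Longrightarrow> lam * v i \<le> Gop m E v i"
    and bB: "\<And>n. \<beta> n \<le> B" and bBi: "\<And>n. \<beta>int n \<le> Bi"
    and eps: "0 < \<epsilon>" and sup: "\<And>n. N0 < n \<Longrightarrow> \<delta> + \<epsilon> \<le> \<beta> n * lam + \<beta>int n"
    and a0: "0 < a" and aW: "a * W \<le> 1" and aR: "a * (W\<^sup>2 * (B * m + Bi + \<delta>)) \<le> \<epsilon> * vmin"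
    and G_def: "G = (\<lambda>y. 1 - exp (a * W * N0) * exp (- a * wsum m v y))"
    and x: "ls x" and x0: "x \<noteq> (\<lambda>_. 0)" and Gx: "0 < G x"
  shows "0 \<le> (\<Sum>u<m. up x u * (G (x(u := x u + 1)) - G x) + dn x u * (G (x(u := x u - 1)) - G x))"
proof -
  define n where "n = tot x"
  define w where "w = wsum m v x"
  define E0 where "E0 = exp (a * W * N0) * exp (- a * w)"
  have E00: "0 < E0" unfolding E0_def by simp
  have n1: "1 \<le> n" using ls_zero_iff[OF x] x0 unfolding n_def by auto
  obtain u0 where u0: "u0 < m" using n1 unfolding n_def total_inf_def by (metis lessThan_iff not_one_le_zero sum.neutral)
  have W0: "0 < W" using vlo[OF u0] vhi[OF u0] vmin by linarith
  have v0: "\<And>i. i < m \<Longrightarrow> 0 \<le> v i" using vlo vmin by (meson less_imp_le order_trans)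
  have wW: "w \<le> W * real n" unfolding w_def n_def by (rule wsum_le[OF vhi])
  have wv: "vmin * real n \<le> w" unfolding w_def n_def by (rule wsum_ge'[OF vlo])
  have w0: "0 \<le> w" using wv vmin by (smt (verit) mult_nonneg_nonneg of_nat_0_le_iff)
  have "E0 < 1" using Gx unfolding G_def E0_def w_def by simp
  hence "a * W * N0 + - a * w < 0" unfolding E0_def by (simp add: exp_add[symmetric])
  hence "a * (W * N0) < a * w" by (simp add: algebra_simps)
  hence "W * N0 < w" using a0 by simp
  hence "W * N0 < W * n" using wW by linarith
  hence nN: "N0 < n" using W0 by simp
  have Gup: "G (x(u := x u + 1)) - G x = E0 * (1 - exp (- (a * v u)))" if u: "u < m" for u
  proof -
    have e: "wsum m v (x(u := x u + 1)) = w + v u" unfolding w_def by (rule wsum_up[OF u])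
    show ?thesis unfolding G_def e E0_def w_def[symmetric]
      by (simp add: algebra_simps exp_add[symmetric])
  qed
  have Gdn: "G (x(u := x u - 1)) - G x = E0 * (1 - exp (a * v u))" if u: "u < m" and xu: "0 < x u" for u
  proof -
    have e: "wsum m v (x(u := x u - 1)) = w - v u" unfolding w_def by (rule wsum_down) (use u xu in auto)
    show ?thesis unfolding G_def e E0_def w_def[symmetric]
      by (simp add: algebra_simps exp_add[symmetric])
  qed
  have termb: "E0 * (up x u * (a * v u - (a * v u)\<^sup>2) + dn x u * (- (a * v u) - (a * v u)\<^sup>2))
      \<le> up x u * (G (x(u := x u + 1)) - G x) + dn x u * (G (x(u := x u - 1)) - G x)" if u: "u < m" for u
  proof -
    have t0: "0 \<le> a * v u" using a0 v0[OF u] by simp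
    have t1: "a * v u \<le> 1" using aW vhi[OF u] a0 by (meson mult_left_mono less_imp_le order_trans)
    have A: "E0 * (up x u * (a * v u - (a * v u)\<^sup>2)) \<le> up x u * (G (x(u := x u + 1)) - G x)"
    proof -
      have "up x u * (a * v u - (a * v u)\<^sup>2) \<le> up x u * (1 - exp (- (a * v u)))"
        by (intro mult_left_mono up_nonneg exp_neg_bound t0)
      hence "E0 * (up x u * (a * v u - (a * v u)\<^sup>2)) \<le> E0 * (up x u * (1 - exp (- (a * v u))))"
        by (rule mult_left_mono) (use E00 in auto)
      also have "\<dots> = up x u * (G (x(u := x u + 1)) - G x)" unfolding Gup[OF u] by (simp add: algebra_simps)
      finally show ?thesis .
    qed
    have B: "E0 * (dn x u * (- (a * v u) - (a * v u)\<^sup>2)) \<le> dn x u * (G (x(u := x u - 1)) - G x)"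
    proof (cases "0 < x u")
      case True
      have "dn x u * (- (a * v u) - (a * v u)\<^sup>2) \<le> dn x u * (1 - exp (a * v u))"
        by (intro mult_left_mono dn_nonneg exp_pos_bound t0 t1)
      hence "E0 * (dn x u * (- (a * v u) - (a * v u)\<^sup>2)) \<le> E0 * (dn x u * (1 - exp (a * v u)))"
        by (rule mult_left_mono) (use E00 in auto)
      also have "\<dots> = dn x u * (G (x(u := x u - 1)) - G x)" unfolding Gdn[OF u True] by (simp add: algebra_simps)
      finally show ?thesis .
    next
      case False thus ?thesis by (simp add: down_rate_def)
    qed
    show ?thesis using A B by (simp add: distrib_left)
  qed
  define R where "R = B * m + Bi + \<delta>"
  have inner: "0 \<le> (\<Sum>u<m. up x u * (a * v u - (a * v u)\<^sup>2) + dn x u * (- (a * v u) - (a * v u)\<^sup>2))"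
  proof -
    have "(\<Sum>u<m. up x u * (a * v u - (a * v u)\<^sup>2) + dn x u * (- (a * v u) - (a * v u)\<^sup>2))
      = (\<Sum>u<m. a * (v u * up x u - v u * dn x u) - a\<^sup>2 * ((v u)\<^sup>2 * (up x u + dn x u)))"
      by (intro sum.cong refl) (simp add: power2_eq_square algebra_simps)
    also have "\<dots> = a * ((\<Sum>u<m. v u * up x u) - (\<Sum>u<m. v u * dn x u)) - a\<^sup>2 * (\<Sum>u<m. (v u)\<^sup>2 * (up x u + dn x u))"
      by (simp add: sum_subtractf sum_distrib_left[symmetric])
    finally have eq: "(\<Sum>u<m. up x u * (a * v u - (a * v u)\<^sup>2) + dn x u * (- (a * v u) - (a * v u)\<^sup>2))
      = a * ((\<Sum>u<m. v u * up x u) - (\<Sum>u<m. v u * dn x u)) - a\<^sup>2 * (\<Sum>u<m. (v u)\<^sup>2 * (up x u + dn x u))" .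
    have s1: "\<epsilon> * (vmin * real n) \<le> (\<Sum>u<m. v u * up x u) - (\<Sum>u<m. v u * dn x u)"
    proof -
      have "(\<Sum>j<m. real (x j) * (lam * v j)) \<le> (\<Sum>j<m. real (x j) * Gop m E v j)"
        using vG by (intro sum_mono mult_left_mono) auto
      hence "lam * w \<le> (\<Sum>j<m. real (x j) * Gop m E v j)"
        unfolding w_def wsum_def by (simp add: sum_distrib_left algebra_simps)
      hence "\<beta> n * (lam * w) \<le> \<beta> n * (\<Sum>j<m. real (x j) * Gop m E v j)"
        using bpos[of n] by (intro mult_left_mono) auto
      hence "(\<beta> n * lam + \<beta>int n - \<delta>) * w \<le> (\<Sum>u<m. v u * up x u) - (\<Sum>u<m. v u * dn x u)"
        unfolding sum_v_up[OF g] sum_v_dn n_def[symmetric] w_def[symmetric] by (simp add: algebra_simps)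
      moreover have "\<epsilon> * w \<le> (\<beta> n * lam + \<beta>int n - \<delta>) * w"
        using sup[OF nN] w0 by (intro mult_right_mono) auto
      moreover have "\<epsilon> * (vmin * real n) \<le> \<epsilon> * w" using wv eps by simp
      ultimately show ?thesis by linarith
    qed
    have s2: "(\<Sum>u<m. (v u)\<^sup>2 * (up x u + dn x u)) \<le> W\<^sup>2 * (R * real n)"
    proof -
      have "(\<Sum>u<m. (v u)\<^sup>2 * (up x u + dn x u)) \<le> (\<Sum>u<m. W\<^sup>2 * (up x u + dn x u))"
      proof (intro sum_mono mult_right_mono)
        fix u assume "u \<in> {..<m}"
        thus "(v u)\<^sup>2 \<le> W\<^sup>2" using v0 vhi by (intro power_mono) auto
        show "0 \<le> up x u + dn x u" using up_nonneg dn_nonneg by (simp add: add_nonneg_nonneg)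
      qed
      also have "\<dots> = W\<^sup>2 * ((\<Sum>u<m. up x u) + (\<Sum>u<m. dn x u))" by (simp add: sum_distrib_left[symmetric] sum.distrib)
      also have "\<dots> \<le> W\<^sup>2 * (R * real n)"
      proof (intro mult_left_mono)
        have "(\<Sum>u<m. up x u) \<le> (B * m + Bi) * real n" unfolding n_def by (rule sum_up_le[OF bB bBi])
        thus "(\<Sum>u<m. up x u) + (\<Sum>u<m. dn x u) \<le> R * real n" unfolding R_def sum_dn n_def
          by (simp add: algebra_simps)
      qed simp
      finally show ?thesis .
    qed
    have "a\<^sup>2 * (\<Sum>u<m. (v u)\<^sup>2 * (up x u + dn x u)) \<le> a\<^sup>2 * (W\<^sup>2 * (R * real n))"
      using s2 by (intro mult_left_mono) auto
    also have "\<dots> = a * real n * (a * (W\<^sup>2 * R))" by (simp add: power2_eq_square algebra_simps)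
    also have "\<dots> \<le> a * real n * (\<epsilon> * vmin)" using aR a0 unfolding R_def by (intro mult_left_mono) auto
    also have "\<dots> = a * (\<epsilon> * (vmin * real n))" by (simp add: algebra_simps)
    also have "\<dots> \<le> a * ((\<Sum>u<m. v u * up x u) - (\<Sum>u<m. v u * dn x u))" using s1 a0 by (intro mult_left_mono) auto
    finally show ?thesis unfolding eq by simp
  qed
  have "0 \<le> E0 * (\<Sum>u<m. up x u * (a * v u - (a * v u)\<^sup>2) + dn x u * (- (a * v u) - (a * v u)\<^sup>2))"
    using E00 inner by simp
  also have "\<dots> = (\<Sum>u<m. E0 * (up x u * (a * v u - (a * v u)\<^sup>2) + dn x u * (- (a * v u) - (a * v u)\<^sup>2)))"
    by (simp only: sum_distrib_left)
  also have "\<dots> \<le> (\<Sum>u<m. up x u * (G (x(u := x u + 1)) - G x) + dn x u * (G (x(u := x u - 1)) - G x))"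
    using termb by (intro sum_mono) auto
  finally show ?thesis .
qed

end



context chain begin

lemma bound_of: "bounded (range f) \<Longrightarrow> \<exists>B. \<forall>n. f n \<le> (B::real)"
  unfolding bounded_iff by (metis abs_le_D1 rangeI real_norm_def)

lemma part_i:
  assumes g: "simple_graph_on m E" and bb: "bounded (range \<beta>)" and bbi: "bounded (range \<beta>int)"
    and l1: "\<beta> \<longlonglongrightarrow> bi" and l2: "\<beta>int \<longlonglongrightarrow> bii"
    and H: "bi * spectral_radius (adj_mat m E) + bii < \<delta>"
  shows "\<exists>C::real. C > 0 \<and> (\<forall>X n. ls X \<longrightarrow> tot X = n \<longrightarrow> n \<ge> 2 \<longrightarrow>
            expected_hitting_time m E \<beta> \<beta>int \<delta> X \<le> ennreal (C * ln (real n)))"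
proof -
  let ?l = "spectral_radius (adj_mat m E)"
  obtain B where bB: "\<And>n. \<beta> n \<le> B" using bound_of[OF bb] by auto
  obtain Bi where bBi: "\<And>n. \<beta>int n \<le> Bi" using bound_of[OF bbi] by auto
  show ?thesis
  proof (cases "m = 0")
    case True
    show ?thesis by (rule exI[of _ 1]) (auto simp: total_inf_def True)
  next
    case False
    hence m0: "0 < m" by simp
    have l0: "0 \<le> ?l" by (rule sr_nonneg[OF m0])
    have bi0: "0 \<le> bi" using l1 by (rule LIMSEQ_le_const) (use bpos less_imp_le in blast)
    define gap where "gap = \<delta> - bi * ?l - bii"
    have gap0: "0 < gap" using H unfolding gap_def by simp
    define \<eta> where "\<eta> = gap / (2 * (bi + 1))"
    have eta0: "0 < \<eta>" unfolding \<eta>_def using gap0 bi0 by simp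
    define \<rho> where "\<rho> = ?l + \<eta>"
    have lrho: "?l < \<rho>" unfolding \<rho>_def using eta0 by simp
    have rho0: "0 \<le> \<rho>" using l0 eta0 unfolding \<rho>_def by simp
    have "bi * \<eta> \<le> gap / 2"
    proof -
      have "bi * \<eta> = gap / 2 * (bi / (bi + 1))" unfolding \<eta>_def using bi0 by (simp add: field_simps)
      also have "\<dots> \<le> gap / 2 * 1" using gap0 bi0 by (intro mult_left_mono) auto
      finally show ?thesis by simp
    qed
    moreover have "bi * \<rho> = bi * ?l + bi * \<eta>" unfolding \<rho>_def by (simp add: distrib_left)
    ultimately have lim_lt: "bi * \<rho> + bii < \<delta> - gap / 4" using gap0 gap_def by linarith
    define \<epsilon> where "\<epsilon> = gap / 4"
    have eps: "0 < \<epsilon>" unfolding \<epsilon>_def using gap0 by simp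
    have "(\<lambda>n. \<beta> n * \<rho> + \<beta>int n) \<longlonglongrightarrow> bi * \<rho> + bii"
      by (intro tendsto_intros l1 l2)
    from order_tendstoD(2)[OF this lim_lt]
    obtain N0 where N0: "\<And>n. N0 \<le> n \<Longrightarrow> \<beta> n * \<rho> + \<beta>int n < \<delta> - gap / 4"
      unfolding eventually_sequentially by auto
    have sub: "\<And>n. N0 < n \<Longrightarrow> \<beta> n * \<rho> + \<beta>int n \<le> \<delta> - \<epsilon>"
      using N0 unfolding \<epsilon>_def by (meson less_imp_le order.strict_implies_order)
    obtain v where v1: "\<And>i. i < m \<Longrightarrow> 1 \<le> v i" and vG: "\<And>i. i < m \<Longrightarrow> Gop m E v i \<le> \<rho> * v i"
      using exists_pos_supereig[OF m0 lrho] by auto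
    define c where "c = 2 / \<epsilon>"
    define \<theta> where "\<theta> = \<delta> / (2 * (B * m + Bi + \<delta>))"
    define K where "K = 2 * (1 + c * (B * \<rho> + Bi)) / (\<theta> ^ N0 * (1 - \<theta>) * \<delta>)"
    define V where "V = (\<lambda>y. c * ln (1 + wsum m v y) + K * (1 - \<theta> ^ min (tot y) (Suc N0)))"
    have B0: "0 < B" using bpos[of 0] bB[of 0] by linarith
    have Bi0: "0 < Bi" using bipos[of 0] bBi[of 0] by linarith
    have den: "\<delta> < 2 * (B * m + Bi + \<delta>)" using B0 Bi0 dpos by (simp add: add_pos_nonneg)
    have th0: "0 < \<theta>" unfolding \<theta>_def using den dpos by (intro divide_pos_pos) auto
    have th1: "\<theta> < 1" unfolding \<theta>_def using den dpos by (simp add: divide_less_eq_1_pos)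
    have c0: "0 < c" unfolding c_def using eps by simp
    have K0: "0 \<le> K" unfolding K_def using th0 th1 dpos c0 B0 Bi0 rho0
      by (intro divide_nonneg_pos mult_nonneg_nonneg add_nonneg_nonneg) auto
    have ws0: "0 \<le> wsum m v y" for y
      unfolding wsum_def using v1 by (intro sum_nonneg mult_nonneg_nonneg) (auto intro: order_trans[OF zero_le_one])
    have V0: "0 \<le> V y" for y
    proof -
      have "0 \<le> c * ln (1 + wsum m v y)" using c0 ws0[of y] by simp
      moreover have "\<theta> ^ min (tot y) (Suc N0) \<le> 1" using th0 th1 by (simp add: power_le_one)
      hence "0 \<le> K * (1 - \<theta> ^ min (tot y) (Suc N0))" using K0 by simp
      ultimately show ?thesis unfolding V_def by simp
    qed
    have key: "h x + (\<integral>\<^sup>+y. P x y * ennreal (V y) \<partial>count_space UNIV) \<le> ennreal (V x)" if x: "ls x" for x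
    proof (rule drift_upper[OF x V0])
      assume x0: "x \<noteq> (\<lambda>_. 0)"
      show "1 + (\<Sum>u<m. up x u * (V (x(u := x u + 1)) - V x) + dn x u * (V (x(u := x u - 1)) - V x)) \<le> 0"
        by (rule drift_i[OF g v1 vG rho0 bB bBi eps sub c_def \<theta>_def K_def V_def x x0])
    qed
    define W where "W = Max (v ` {..<m})"
    have vW: "\<And>i. i < m \<Longrightarrow> v i \<le> W" unfolding W_def by (intro Max_ge) auto
    have W1: "1 \<le> W" using vW[OF m0] v1[OF m0] by linarith
    define C where "C = c + (c * ln (1 + W) + K) / ln 2"
    have ln20: "0 < ln (2::real)" by simp
    have CK0: "0 \<le> c * ln (1 + W) + K" using c0 W1 K0 by simp
    have C0: "0 < C" unfolding C_def using c0 CK0 ln20 by (simp add: add_pos_nonneg)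
    show ?thesis
    proof (intro exI[of _ C] conjI allI impI C0)
      fix X n assume X: "ls X" and n: "tot X = n" and n2: "2 \<le> n"
      have "expected_hitting_time m E \<beta> \<beta>int \<delta> X \<le> ennreal (V X)"
        by (rule hitting_upper[OF X key])
      also have "V X \<le> C * ln (real n)"
      proof -
        have "wsum m v X \<le> W * real n" using wsum_le[of v W X, OF vW] n by simp
        moreover have "1 \<le> real n" using n2 by simp
        moreover have "(1 + W) * real n = real n + W * real n" by (simp add: distrib_right)
        ultimately have "1 + wsum m v X \<le> (1 + W) * real n" by linarith
        hence "ln (1 + wsum m v X) \<le> ln ((1 + W) * real n)" using ws0[of X] by (intro ln_mono) auto
        also have "\<dots> = ln (1 + W) + ln (real n)" using W1 n2 by (simp add: ln_mult)
        finally have L: "ln (1 + wsum m v X) \<le> ln (1 + W) + ln (real n)" .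
        have "\<theta> ^ min (tot X) (Suc N0) \<ge> 0" using th0 by simp
        hence P1: "K * (1 - \<theta> ^ min (tot X) (Suc N0)) \<le> K" using K0 by (simp add: mult_left_le)
        have "V X \<le> c * (ln (1 + W) + ln (real n)) + K" unfolding V_def using L P1 c0
          by (smt (verit) mult_left_mono)
        also have "\<dots> = c * ln (real n) + (c * ln (1 + W) + K) * 1" by (simp add: algebra_simps)
        also have "\<dots> \<le> c * ln (real n) + (c * ln (1 + W) + K) * (ln (real n) / ln 2)"
        proof -
          have "ln 2 \<le> ln (real n)" using n2 by simp
          hence "1 \<le> ln (real n) / ln 2" using ln20 by simp
          thus ?thesis using CK0 by (intro add_left_mono mult_left_mono) auto
        qed
        also have "\<dots> = C * ln (real n)" unfolding C_def by (simp add: algebra_simps)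
        finally show ?thesis .
      qed
      hence "ennreal (V X) \<le> ennreal (C * ln (real n))" by (rule ennreal_leI)
      finally show "expected_hitting_time m E \<beta> \<beta>int \<delta> X \<le> ennreal (C * ln (real n))" .
    qed
  qed
qed

lemma int_ge_point: "f a \<le> (\<integral>\<^sup>+x. f x \<partial>count_space UNIV)"
proof -
  have "f a = (\<integral>\<^sup>+x. (if x = a then f a else 0) * 1 \<partial>count_space UNIV)"
    using int_single[of a "f a" "\<lambda>_. 1"] by simp
  also have "\<dots> \<le> (\<integral>\<^sup>+x. f x \<partial>count_space UNIV)" by (intro nn_integral_mono) auto
  finally show ?thesis .
qed

lemma up_pos: "0 < x u \<Longrightarrow> 0 < up x u"
proof -
  assume xu: "0 < x u"
  have "0 \<le> (\<Sum>j<m. if E u j then \<beta> (tot x) * real (x j) else 0)"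
    using bpos[of "tot x"] by (intro sum_nonneg) auto
  moreover have "0 < \<beta>int (tot x) * real (x u)" using bipos[of "tot x"] xu by simp
  ultimately show ?thesis unfolding up_rate_def by linarith
qed

lemma P_up_pos:
  assumes y: "ls y" and u: "u < m" and yu: "0 < y u"
  shows "0 < P y (y(u := y u + 1))"
proof -
  have y0: "y \<noteq> (\<lambda>_. 0)" using yu by auto
  have q0: "0 < q y" using q_pos[OF y y0] .
  let ?t = "\<lambda>w. (if y(u := y u + 1) = y(w := y w + 1) then ennreal (up y w / q y) else 0)
        + (if 0 < y w \<and> y(u := y u + 1) = y(w := y w - 1) then ennreal (dn y w / q y) else 0)"
  have "0 < ennreal (up y u / q y)" using up_pos[of y u, OF yu] q0 by simp
  also have "\<dots> \<le> ?t u" by simp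
  also have "\<dots> \<le> (\<Sum>w<m. ?t w)" using u by (intro member_le_sum) auto
  also have "\<dots> = P y (y(u := y u + 1))" unfolding jump_prob_def using y0 by simp
  finally show ?thesis .
qed

lemma mu_reach:
  assumes X: "ls X" and u: "u < m" and Xu: "0 < X u"
  shows "0 < mu X k (X(u := X u + k))"
proof (induction k)
  case 0 thus ?case by simp
next
  case (Suc k)
  let ?y = "X(u := X u + k)"
  have yl: "ls ?y" using ls_upd[OF X u] .
  have yu: "0 < ?y u" using Xu by simp
  have eq: "X(u := X u + Suc k) = ?y(u := ?y u + 1)" by simp
  have a: "0 < mu X k ?y" by (rule Suc)
  have b: "0 < P ?y (?y(u := ?y u + 1))" by (rule P_up_pos[OF yl u yu])
  have "0 < mu X k ?y * P ?y (?y(u := ?y u + 1))"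
    using a b by (metis ennreal_zero_less_mult_iff)
  also have "\<dots> \<le> (\<integral>\<^sup>+x. mu X k x * P x (?y(u := ?y u + 1)) \<partial>count_space UNIV)"
    by (rule int_ge_point[where f = "\<lambda>x. mu X k x * P x (?y(u := ?y u + 1))"])
  also have "\<dots> = mu X (Suc k) (X(u := X u + Suc k))" unfolding eq by simp
  finally show ?case .
qed

lemma harmonic_inf:
  assumes R: "0 < R" and M: "1 \<le> M"
  shows "(\<Sum>j. ennreal (1 / (R * real (M + j)))) = \<infinity>"
proof (rule ccontr)
  assume "(\<Sum>j. ennreal (1 / (R * real (M + j)))) \<noteq> \<infinity>"
  hence "summable (\<lambda>j. 1 / (R * real (M + j)))"
    using summable_suminf_not_top[of "\<lambda>j. 1 / (R * real (M + j))"] R by auto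
  hence "summable (\<lambda>j. R * (1 / (R * real (M + j))))" by (rule summable_mult)
  moreover have "R * (1 / (R * real (M + j))) = inverse (real (j + M))" for j
  proof -
    have "0 < real (M + j)" using M by simp
    hence "0 < R * real (M + j)" using R by simp
    hence "R * real (M + j) \<noteq> 0" by (metis less_irrefl)
    thus ?thesis using R by (simp add: divide_inverse inverse_mult_distrib add.commute)
  qed
  ultimately have "summable (\<lambda>j. inverse (real (j + M)))" by simp
  hence "summable (\<lambda>n. inverse (real n))" by (rule summable_iff_shift[THEN iffD1])
  thus False using not_summable_harmonic[where 'a = real] by simp
qed

lemma part_ii:
  assumes g: "simple_graph_on m E" and conn: "connected_on m E"
    and bb: "bounded (range \<beta>)" and bbi: "bounded (range \<beta>int)"
    and l1: "\<beta> \<longlonglongrightarrow> bi" and l2: "\<beta>int \<longlonglongrightarrow> bii"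
    and H: "\<delta> < bi * spectral_radius (adj_mat m E) + bii"
    and X: "ls X" and X0: "X \<noteq> (\<lambda>_. 0)"
  shows "expected_hitting_time m E \<beta> \<beta>int \<delta> X = \<infinity>"
proof -
  let ?l = "spectral_radius (adj_mat m E)"
  obtain B where bB: "\<And>n. \<beta> n \<le> B" using bound_of[OF bb] by auto
  obtain Bi where bBi: "\<And>n. \<beta>int n \<le> Bi" using bound_of[OF bbi] by auto
  have B0: "0 < B" using bpos[of 0] bB[of 0] by linarith
  have Bi0: "0 < Bi" using bipos[of 0] bBi[of 0] by linarith
  obtain u0 where u0: "u0 < m" and Xu0: "0 < X u0"
  proof -
    obtain u where "X u \<noteq> 0" using X0 by auto
    moreover have "u < m" using X \<open>X u \<noteq> 0\<close> unfolding loc_state_def by (meson not_le)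
    ultimately show ?thesis using that by auto
  qed
  have m0: "0 < m" using u0 by simp
  obtain v where vpos: "\<And>i. i < m \<Longrightarrow> 0 < v i" and vG: "\<And>i. i < m \<Longrightarrow> ?l * v i \<le> Gop m E v i"
    using exists_pos_subeig[OF m0 g conn] by auto
  define vmin where "vmin = Min (v ` {..<m})"
  define W where "W = Max (v ` {..<m})"
  have vlo: "\<And>i. i < m \<Longrightarrow> vmin \<le> v i" unfolding vmin_def by (intro Min_le) auto
  have vhi: "\<And>i. i < m \<Longrightarrow> v i \<le> W" unfolding W_def by (intro Max_ge) auto
  have vmin0: "0 < vmin"
  proof -
    have "vmin \<in> v ` {..<m}" unfolding vmin_def using m0 by (intro Min_in) auto
    thus ?thesis using vpos by auto
  qed
  have W0: "0 < W" using vhi[OF u0] vpos[OF u0] by linarith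
  define gap where "gap = bi * ?l + bii - \<delta>"
  have gap0: "0 < gap" using H unfolding gap_def by simp
  define \<epsilon> where "\<epsilon> = gap / 2"
  have eps: "0 < \<epsilon>" unfolding \<epsilon>_def using gap0 by simp
  have lim: "(\<lambda>n. \<beta> n * ?l + \<beta>int n) \<longlonglongrightarrow> bi * ?l + bii" by (intro tendsto_intros l1 l2)
  have lt: "\<delta> + \<epsilon> < bi * ?l + bii" unfolding \<epsilon>_def using gap0 gap_def by linarith
  have "eventually (\<lambda>n. \<delta> + \<epsilon> < \<beta> n * ?l + \<beta>int n) sequentially"
    by (rule order_tendstoD(1)[OF lim lt])
  then obtain N0 where N0: "\<And>n. N0 \<le> n \<Longrightarrow> \<delta> + \<epsilon> < \<beta> n * ?l + \<beta>int n"
    unfolding eventually_sequentially by auto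
  have sup: "\<delta> + \<epsilon> \<le> \<beta> n * ?l + \<beta>int n" if "N0 < n" for n
    using N0[of n] that by simp
  define R where "R = B * m + Bi + \<delta>"
  have "0 \<le> B * m" using B0 by simp
  hence R0: "0 < R" unfolding R_def using Bi0 dpos by linarith
  define a where "a = min (1 / W) (\<epsilon> * vmin / (W\<^sup>2 * R))"
  have a0: "0 < a" unfolding a_def using W0 eps vmin0 R0 by simp
  have aW: "a * W \<le> 1"
  proof -
    have "a * W \<le> 1 / W * W" unfolding a_def using W0 by (intro mult_right_mono) auto
    thus ?thesis using W0 by simp
  qed
  have aR: "a * (W\<^sup>2 * (B * m + Bi + \<delta>)) \<le> \<epsilon> * vmin"
  proof -
    have WR: "0 < W\<^sup>2 * R" using W0 R0 by simp
    have "a \<le> \<epsilon> * vmin / (W\<^sup>2 * R)" unfolding a_def by simp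
    hence "a * (W\<^sup>2 * R) \<le> \<epsilon> * vmin / (W\<^sup>2 * R) * (W\<^sup>2 * R)" using WR by (intro mult_right_mono) auto
    also have "\<dots> = \<epsilon> * vmin" using W0 R0 by simp
    finally show ?thesis unfolding R_def .
  qed
  define G where "G = (\<lambda>y. 1 - exp (a * W * N0) * exp (- a * wsum m v y))"
  have subh: "ennreal (G x) \<le> (\<integral>\<^sup>+y. P x y * ennreal (G y) \<partial>count_space UNIV)" if x: "ls x" for x
  proof (rule drift_lower[OF x])
    assume "x \<noteq> (\<lambda>_. 0)" "0 < G x"
    thus "0 \<le> (\<Sum>u<m. up x u * (G (x(u := x u + 1)) - G x) + dn x u * (G (x(u := x u - 1)) - G x))"
      by (intro drift_ii[OF g vmin0 vlo vhi vG bB bBi eps sup a0 aW aR G_def x])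
  qed
  have mono: "(\<integral>\<^sup>+x. mu X n x * ennreal (G x) \<partial>count_space UNIV) \<le> (\<integral>\<^sup>+x. mu X (n + j) x * ennreal (G x) \<partial>count_space UNIV)" for n j
  proof (induction j)
    case 0 thus ?case by simp
  next
    case (Suc j)
    have "(\<integral>\<^sup>+x. mu X (n + j) x * ennreal (G x) \<partial>count_space UNIV) \<le> (\<integral>\<^sup>+x. mu X (Suc (n + j)) x * ennreal (G x) \<partial>count_space UNIV)"
      by (rule sub_mono[OF X subh])
    with Suc.IH have "(\<integral>\<^sup>+x. mu X n x * ennreal (G x) \<partial>count_space UNIV) \<le> (\<integral>\<^sup>+x. mu X (Suc (n + j)) x * ennreal (G x) \<partial>count_space UNIV)"
      by (rule order_trans)
    thus ?case by simp
  qed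
  obtain k :: nat where k: "W * N0 / vmin < real k" using reals_Archimedean2 by blast
  define y where "y = X(u0 := X u0 + k)"
  have yl: "ls y" unfolding y_def using ls_upd[OF X u0] .
  have toty: "tot y = tot X + k" unfolding y_def using tot_upd[OF u0, of X "X u0 + k"] by simp
  have "W * N0 < vmin * real k" using k vmin0 by (simp add: field_simps)
  also have "\<dots> \<le> vmin * real (tot y)" unfolding toty using vmin0 by simp
  also have "\<dots> \<le> wsum m v y" by (rule wsum_ge'[OF vlo])
  finally have wy: "W * N0 < wsum m v y" .
  have Gy: "0 < G y"
  proof -
    have "exp (a * W * N0) * exp (- a * wsum m v y) = exp (a * (W * N0 - wsum m v y))"
      by (simp add: exp_add[symmetric] algebra_simps)
    also have "\<dots> < 1" using a0 wy by (simp add: mult_pos_neg)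
    finally show ?thesis unfolding G_def by simp
  qed
  define p where "p = mu X k y * ennreal (G y)"
  have p0: "0 < p" unfolding p_def using mu_reach[OF X u0 Xu0, of k] Gy unfolding y_def
    by (simp add: ennreal_zero_less_mult_iff)
  have p_le: "p \<le> (\<integral>\<^sup>+x. mu X (k + j) x * ennreal (G x) \<partial>count_space UNIV)" for j
    unfolding p_def using int_ge_point[where f = "\<lambda>x. mu X k x * ennreal (G x)" and a = y] mono[of k j]
    by (rule order_trans)
  have G1: "G x \<le> 1" for x unfolding G_def by simp
  have G00: "G (\<lambda>_. 0) \<le> 0" unfolding G_def wsum_def using a0 W0 by simp
  define cc where "cc n = ennreal (1 / (R * real (tot X + n)))" for n
  have NX: "1 \<le> tot X" using ls_zero_iff[OF X] X0 by auto
  have point: "mu X n x * ennreal (G x) * cc n \<le> mu X n x * h x" for n x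
  proof (cases "mu X n x = 0")
    case True thus ?thesis by simp
  next
    case False
    from mu_support[OF X False] have xl: "ls x" and xt: "tot x \<le> tot X + n" by auto
    show ?thesis
    proof (cases "x = (\<lambda>_. 0)")
      case True thus ?thesis using G00 by (simp add: ennreal_neg)
    next
      case x0: False
      have q0: "0 < q x" using q_pos[OF xl x0] .
      have "q x \<le> R * real (tot x)"
      proof -
        have "q x = (\<Sum>u<m. up x u) + \<delta> * real (tot x)" by (rule q_eq)
        also have "\<dots> \<le> (B * m + Bi) * real (tot x) + \<delta> * real (tot x)"
          using sum_up_le[OF bB bBi, of x] by simp
        also have "\<dots> = R * real (tot x)" unfolding R_def by (simp add: algebra_simps)
        finally show ?thesis .
      qed
      also have "\<dots> \<le> R * real (tot X + n)" using xt R0 by (intro mult_left_mono) auto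
      finally have qle: "q x \<le> R * real (tot X + n)" .
      have "ennreal (G x) * cc n \<le> 1 * ennreal (1 / q x)"
      proof (intro mult_mono)
        show "ennreal (G x) \<le> 1" using G1[of x] by (simp add: ennreal_le_1)
        show "cc n \<le> ennreal (1 / q x)" unfolding cc_def using q0 qle
          by (intro ennreal_leI divide_left_mono) auto
      qed auto
      hence "ennreal (G x) * cc n \<le> h x" unfolding mean_hold_def using x0 by simp
      hence "mu X n x * (ennreal (G x) * cc n) \<le> mu X n x * h x" by (rule mult_left_mono) simp
      thus ?thesis by (simp add: mult.assoc)
    qed
  qed
  have lowb: "p * cc (k + j) \<le> (\<integral>\<^sup>+x. mu X (k + j) x * h x \<partial>count_space UNIV)" for j
  proof -
    have "p * cc (k + j) \<le> (\<integral>\<^sup>+x. mu X (k + j) x * ennreal (G x) \<partial>count_space UNIV) * cc (k + j)"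
      by (intro mult_right_mono p_le) auto
    also have "\<dots> = (\<integral>\<^sup>+x. mu X (k + j) x * ennreal (G x) * cc (k + j) \<partial>count_space UNIV)"
      by (simp add: nn_integral_multc)
    also have "\<dots> \<le> (\<integral>\<^sup>+x. mu X (k + j) x * h x \<partial>count_space UNIV)"
      by (intro nn_integral_mono point)
    finally show ?thesis .
  qed
  let ?a = "\<lambda>n. \<integral>\<^sup>+x. mu X n x * h x \<partial>count_space UNIV"
  have "(\<Sum>j. cc (j + k)) = \<infinity>"
  proof -
    have "(\<Sum>j. cc (j + k)) = (\<Sum>j. ennreal (1 / (R * real ((tot X + k) + j))))"
    proof -
      have "\<And>j. tot X + (j + k) = (tot X + k) + j" by simp
      thus ?thesis unfolding cc_def by (simp only:)
    qed
    also have "\<dots> = \<infinity>" using harmonic_inf[OF R0, of "tot X + k"] NX by simp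
    finally show ?thesis .
  qed
  hence "p * (\<Sum>j. cc (j + k)) = \<infinity>" using p0 by (simp add: ennreal_mult_top)
  hence inf: "(\<Sum>j. p * cc (j + k)) = \<infinity>" by simp
  have le1: "(\<Sum>j. p * cc (j + k)) \<le> (\<Sum>j. ?a (j + k))"
  proof (rule suminf_le)
    fix j show "p * cc (j + k) \<le> ?a (j + k)" using lowb[of j] by (simp add: add.commute)
  qed auto
  have eq: "(\<Sum>n. ?a n) = (\<Sum>j. ?a (j + k)) + (\<Sum>j<k. ?a j)"
    by (rule suminf_offset) simp
  have le2: "(\<Sum>j. ?a (j + k)) \<le> (\<Sum>n. ?a n)" unfolding eq by simp
  have "\<infinity> \<le> (\<Sum>j. ?a (j + k))" using le1 unfolding inf .
  hence "\<infinity> \<le> (\<Sum>n. ?a n)" using le2 by (rule order_trans)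
  thus ?thesis unfolding expected_hitting_time_def by (simp add: top_unique)
qed

end

theorem theorem1:
  fixes m :: nat and E :: "nat \<Rightarrow> nat \<Rightarrow> bool"
    and \<beta> \<beta>int :: "nat \<Rightarrow> real" and \<beta>inf \<beta>intinf \<delta> :: real
  assumes graph: "simple_graph_on m E"
    and conn: "connected_on m E"
    and \<beta>_pos: "\<And>n. \<beta> n > 0" and \<beta>int_pos: "\<And>n. \<beta>int n > 0"
    and \<beta>_bdd: "bounded (range \<beta>)" and \<beta>int_bdd: "bounded (range \<beta>int)"
    and \<beta>_lim: "\<beta> \<longlonglongrightarrow> \<beta>inf" and \<beta>int_lim: "\<beta>int \<longlonglongrightarrow> \<beta>intinf"
    and \<delta>_pos: "\<delta> > 0"
  shows "(\<beta>inf * spectral_radius (adj_mat m E) + \<beta>intinf < \<delta> \<longrightarrow>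
            (\<exists>C::real. C > 0 \<and>
               (\<forall>X n. loc_state m X \<longrightarrow> total_inf m X = n \<longrightarrow> n \<ge> 2 \<longrightarrow>
                  expected_hitting_time m E \<beta> \<beta>int \<delta> X \<le> ennreal (C * ln (real n)))))
       \<and> (\<beta>inf * spectral_radius (adj_mat m E) + \<beta>intinf > \<delta> \<longrightarrow>
            (\<forall>X. loc_state m X \<longrightarrow> X \<noteq> (\<lambda>_. 0) \<longrightarrow>
                  expected_hitting_time m E \<beta> \<beta>int \<delta> X = \<infinity>))"
  proof -
  interpret chain m E \<beta> \<beta>int \<delta>
    by unfold_locales (use \<beta>_pos \<beta>int_pos \<delta>_pos in auto)
  show ?thesis
  proof (intro conjI impI allI)
    assume H: "\<beta>inf * spectral_radius (adj_mat m E) + \<beta>intinf < \<delta>"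
    show "\<exists>C::real. C > 0 \<and>
               (\<forall>X n. loc_state m X \<longrightarrow> total_inf m X = n \<longrightarrow> n \<ge> 2 \<longrightarrow>
                  expected_hitting_time m E \<beta> \<beta>int \<delta> X \<le> ennreal (C * ln (real n)))"
      by (rule part_i[OF graph \<beta>_bdd \<beta>int_bdd \<beta>_lim \<beta>int_lim H])
  next
    fix X
    assume H: "\<beta>inf * spectral_radius (adj_mat m E) + \<beta>intinf > \<delta>"
      and X: "loc_state m X" and X0: "X \<noteq> (\<lambda>_. 0)"
    show "expected_hitting_time m E \<beta> \<beta>int \<delta> X = \<infinity>"
      by (rule part_ii[OF graph conn \<beta>_bdd \<beta>int_bdd \<beta>_lim \<beta>int_lim H X X0])
  qed
qed

end
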